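(* There exist a Cauchy--de Branges space $\mathcal{H}(T,A,\mu)$ with $A$ of order $2$, and two closed subspaces $\mathcal{H}_1,\mathcal{H}_2\subset\mathcal{H}(T,A,\mu)$ which are nearly invariant, closed under $f\mapsto f^*$ ($f^*(z)=\overline{f(\overline z)}$), and without common zeros, such that neither $\mathcal{H}_1\subset\mathcal{H}_2$ nor $\mathcal{H}_2\subset\mathcal{H}_1$. Moreover, these subspaces can be chosen of the form $\mathcal{H}_j=\mathcal{H}_{G_j}$, $j=1,2$, for suitable entire functions $G_1,G_2\in\mathcal{H}(T,A,\mu)$ with simple zeros.
   Context: Cauchy--de Branges space: $T=\{t_n\}\subset\mathbb{C}$ pairwise distinct with $|t_n|\to\infty$ and finite convergence exponent; $A$ an entire function with simple zeros whose zero set is exactly $T$; $\mu_n>0$ with $\sum_n\frac{\mu_n}{|t_n|^2+1}<\infty$; $$\mathcal{H}(T,A,\mu)=\Big\{f(z)=A(z)\sum_n\frac{a_n\mu_n^{1/2}}{z-t_n}:\ a\in\ell^2\Big\},\qquad \|f\|=\|a\|_{\ell^2}.$$ A closed subspace $\mathcal{H}_0$ is nearly invariant if there is $w_0\in\mathbb{C}$ with $f/(z-w_0)\in\mathcal{H}_0$ whenever $f\in\mathcal{H}_0$, $f(w_0)=0$; it has no common zeros if no $w\in\mathbb{C}$ is a zero of all $f\in\mathcal{H}_0$. For an entire function $G$ such that $G(z)/(z-\lambda)\in\mathcal{H}(T,A,\mu)$ whenever $G(\lambda)=0$, define $\mathcal{H}_G=\overline{\operatorname{Span}}\{G(z)/(z-\lambda):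 G(\lambda)=0\}$ (closure in $\mathcal{H}(T,A,\mu)$). *)

theory Defs
  imports "HOL-Analysis.Analysis"
begin

definition cdb_data :: "(nat \<Rightarrow> complex) \<Rightarrow> (complex \<Rightarrow> complex) \<Rightarrow> (nat \<Rightarrow> real) \<Rightarrow> bool" where
  "cdb_data t A \<mu> \<longleftrightarrow>
     inj t \<and>
     filterlim (\<lambda>n. norm (t n)) at_top sequentially \<and>
     (\<exists>p>0. summable (\<lambda>n. if t n = 0 then 0 else norm (t n) powr (- p))) \<and>
     A holomorphic_on UNIV \<and>
     {z. A z = 0} = range t \<and>
     (\<forall>n. deriv A (t n) \<noteq> 0) \<and>
     (\<forall>n. \<mu> n > 0) \<and>
     summable (\<lambda>n. \<mu> n / ((norm (t n))\<^sup>2 + 1))"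

definition is_l2 :: "(nat \<Rightarrow> complex) \<Rightarrow> bool" where
  "is_l2 a \<longleftrightarrow> summable (\<lambda>n. (norm (a n))\<^sup>2)"

text \<open>The function A(z) * sum a_n mu_n^(1/2) / (z - t_n); at z = t_m the value is the
 (removable-singularity) limit A'(t_m) a_m mu_m^(1/2).\<close>
definition cdb_fun :: "(nat \<Rightarrow> complex) \<Rightarrow> (complex \<Rightarrow> complex) \<Rightarrow> (nat \<Rightarrow> real) \<Rightarrow> (nat \<Rightarrow> complex)
    \<Rightarrow> complex \<Rightarrow> complex" where
  "cdb_fun t A \<mu> a z =
     (if z \<in> range t then (let m = inv t z in deriv A z * a m * of_real (sqrt (\<mu> m)))
      else A z * (\<Sum>n. a n * of_real (sqrt (\<mu> n)) / (z - t n)))"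

definition cdb_space :: "(nat \<Rightarrow> complex) \<Rightarrow> (complex \<Rightarrow> complex) \<Rightarrow> (nat \<Rightarrow> real) \<Rightarrow> (complex \<Rightarrow> complex) set" where
  "cdb_space t A \<mu> = {f. \<exists>a. is_l2 a \<and> f = cdb_fun t A \<mu> a}"

text \<open>Norm: the l2-norm of the coefficient sequence a, recovered as
 a_n = f(t_n) / (A'(t_n) mu_n^(1/2)).\<close>
definition cdb_norm :: "(nat \<Rightarrow> complex) \<Rightarrow> (complex \<Rightarrow> complex) \<Rightarrow> (nat \<Rightarrow> real) \<Rightarrow> (complex \<Rightarrow> complex) \<Rightarrow> real" where
  "cdb_norm t A \<mu> f = sqrt (\<Sum>n. (norm (f (t n)))\<^sup>2 / ((norm (deriv A (t n)))\<^sup>2 * \<mu> n))"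

definition cdb_closed_subspace :: "(nat \<Rightarrow> complex) \<Rightarrow> (complex \<Rightarrow> complex) \<Rightarrow> (nat \<Rightarrow> real)
    \<Rightarrow> (complex \<Rightarrow> complex) set \<Rightarrow> bool" where
  "cdb_closed_subspace t A \<mu> S \<longleftrightarrow>
     S \<subseteq> cdb_space t A \<mu> \<and>
     (\<lambda>_. 0) \<in> S \<and>
     (\<forall>f\<in>S. \<forall>g\<in>S. (\<lambda>z. f z + g z) \<in> S) \<and>
     (\<forall>c. \<forall>f\<in>S. (\<lambda>z. c * f z) \<in> S) \<and>
     (\<forall>F f. (\<forall>k. F k \<in> S) \<longrightarrow> f \<in> cdb_space t A \<mu> \<longrightarrow>
        ((\<lambda>k. cdb_norm t A \<mu> (\<lambda>z. F k z - f z)) \<longlonglongrightarrow> 0) \<longrightarrow> f \<in> S)"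

text \<open>f(z)/(z - w), extended by its removable value f'(w) at z = w (used when f(w) = 0).\<close>
definition divq :: "(complex \<Rightarrow> complex) \<Rightarrow> complex \<Rightarrow> complex \<Rightarrow> complex" where
  "divq f w z = (if z = w then deriv f w else f z / (z - w))"

definition nearly_invariant :: "(complex \<Rightarrow> complex) set \<Rightarrow> bool" where
  "nearly_invariant S \<longleftrightarrow> (\<exists>w0. \<forall>f\<in>S. f w0 = 0 \<longrightarrow> divq f w0 \<in> S)"

definition no_common_zeros :: "(complex \<Rightarrow> complex) set \<Rightarrow> bool" where
  "no_common_zeros S \<longleftrightarrow> (\<forall>w. \<exists>f\<in>S. f w \<noteq> 0)"

definition star_closed :: "(complex \<Rightarrow> complex) set \<Rightarrow> bool" where
  "star_closed S \<longleftrightarrow> (\<forall>f\<in>S. (\<lambda>z. cnj (f (cnj z))) \<in> S)"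

definition H_G :: "(nat \<Rightarrow> complex) \<Rightarrow> (complex \<Rightarrow> complex) \<Rightarrow> (nat \<Rightarrow> real) \<Rightarrow> (complex \<Rightarrow> complex)
    \<Rightarrow> (complex \<Rightarrow> complex) set" where
  "H_G t A \<mu> G = \<Inter>{S. cdb_closed_subspace t A \<mu> S \<and> {divq G l | l. G l = 0} \<subseteq> S}"

definition has_order :: "(complex \<Rightarrow> complex) \<Rightarrow> real \<Rightarrow> bool" where
  "has_order A \<rho> \<longleftrightarrow>
     (\<forall>l>\<rho>. \<exists>R. \<forall>z. norm z \<ge> R \<longrightarrow> norm (A z) \<le> exp (norm z powr l)) \<and>
     (\<forall>l<\<rho>. \<not> (\<exists>R. \<forall>z. norm z \<ge> R \<longrightarrow> norm (A z) \<le> exp (norm z powr l)))"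

end

theory Submission
  imports Defs "HOL-Complex_Analysis.Complex_Analysis" "HOL-Real_Asymp.Real_Asymp"
begin


definition A0 :: "complex \<Rightarrow> complex" where "A0 z = sin z * cos (\<i> * z)"
definition A0' :: "complex \<Rightarrow> complex" where
  "A0' z = cos z * cos (\<i> * z) - \<i> * (sin z * sin (\<i> * z))"
definition AA :: "complex \<Rightarrow> complex" where "AA z = exp (z^2) * A0 z"

definition tt :: "nat \<Rightarrow> complex" where
  "tt n = (if n mod 4 = 0 then of_real (real (n div 4) * pi)
           else if n mod 4 = 1 then of_real (- (real (n div 4) + 1) * pi)
           else if n mod 4 = 2 then \<i> * of_real ((real (n div 4) + 1/2) * pi)
           else - (\<i> * of_real ((real (n div 4) + 1/2) * pi)))"

lemma nat_mod4_cases: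
  fixes n :: nat
  obtains m where "n = 4*m" | m where "n = 4*m+1" | m where "n = 4*m+2" | m where "n = 4*m+3"
proof -
  have "n mod 4 < 4" by simp
  then consider "n mod 4 = 0" | "n mod 4 = 1" | "n mod 4 = 2" | "n mod 4 = 3" by linarith
  then show ?thesis
  proof cases
    case 1 then have "n = 4*(n div 4)" by presburger then show ?thesis by (rule that(1))
  next
    case 2 then have "n = 4*(n div 4) + 1" by presburger then show ?thesis by (rule that(2))
  next
    case 3 then have "n = 4*(n div 4) + 2" by presburger then show ?thesis by (rule that(3))
  next
    case 4 then have "n = 4*(n div 4) + 3" by presburger then show ?thesis by (rule that(4))
  qed
qed

lemma tt0: "tt (4*m) = of_real (real m * pi)" by (simp add: tt_def)
lemma tt1: "tt (4*m+1) = of_real (- (real m + 1) * pi)"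
proof -
  have a: "(4*m+1) mod 4 = (1::nat)" "(4*m+1) div 4 = m" by presburger+
  show ?thesis unfolding tt_def a by simp
qed
lemma tt2: "tt (4*m+2) = \<i> * of_real ((real m + 1/2) * pi)"
proof -
  have a: "(4*m+2) mod 4 = (2::nat)" "(4*m+2) div 4 = m" by presburger+
  show ?thesis unfolding tt_def a by simp
qed
lemma tt3: "tt (4*m+3) = - (\<i> * of_real ((real m + 1/2) * pi))"
proof -
  have a: "(4*m+3) mod 4 = (3::nat)" "(4*m+3) div 4 = m" by presburger+
  show ?thesis unfolding tt_def a by simp
qed

lemma A0_zero_iff: "A0 z = 0 \<longleftrightarrow> z \<in> range tt"
proof
  assume "A0 z = 0"
  then have "sin z = 0 \<or> cos (\<i> * z) = 0" by (simp add: A0_def)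
  then show "z \<in> range tt"
  proof
    assume "sin z = 0"
    then obtain k :: int where k: "z = of_real (k * pi)" by (auto simp: sin_eq_0)
    show ?thesis
    proof (cases "k \<ge> 0")
      case True
      then have "z = tt (4 * nat k)" using k by (simp add: tt0)
      then show ?thesis by blast
    next
      case False
      then have "z = tt (4 * nat (-k-1) + 1)" unfolding tt1 using k by (simp add: of_nat_nat)
      then show ?thesis by blast
    qed
  next
    assume "cos (\<i> * z) = 0"
    then obtain k :: int where k: "\<i> * z = of_real (k * pi) + of_real pi / 2" by (auto simp: cos_eq_0)
    have "z = - \<i> * (\<i> * z)" by simp
    also have "\<dots> = - (\<i> * of_real ((k + 1/2) * pi))" unfolding k by (simp add: field_simps)
    finally have z: "z = - (\<i> * of_real ((k + 1/2) * pi))" .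
    show ?thesis
    proof (cases "k \<ge> 0")
      case True
      then have "z = tt (4 * nat k + 3)" unfolding tt3 using z by simp
      then show ?thesis by blast
    next
      case False
      have e: "real (nat (-k-1)) = - real_of_int k - 1" using False by simp
      have "z = tt (4 * nat (-k-1) + 2)" unfolding tt2 e using z by (simp add: algebra_simps)
      then show ?thesis by blast
    qed
  qed
next
  assume "z \<in> range tt"
  then obtain n where n: "z = tt n" by auto
  show "A0 z = 0"
  proof (cases n rule: nat_mod4_cases)
    case (1 m)
    have "sin z = 0" unfolding n 1 tt0 sin_eq_0 by (rule exI[of _ "int m"]) simp
    then show ?thesis by (simp add: A0_def)
  next
    case (2 m)
    have "sin z = 0" unfolding n 2 tt1 sin_eq_0 by (rule exI[of _ "- int m - 1"]) simp
    then show ?thesis by (simp add: A0_def)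
  next
    case (3 m)
    have "cos (\<i> * z) = 0" unfolding n 3 tt2 cos_eq_0
      by (rule exI[of _ "- int m - 1"]) (simp add: algebra_simps)
    then show ?thesis by (simp add: A0_def)
  next
    case (4 m)
    have "cos (\<i> * z) = 0" unfolding n 4 tt3 cos_eq_0
      by (rule exI[of _ "int m"]) (simp add: algebra_simps)
    then show ?thesis by (simp add: A0_def)
  qed
qed


lemma tt_cases:
  obtains m where "n = 4*m" "tt n = Complex (real m * pi) 0"
  | m where "n = 4*m+1" "tt n = Complex (- (real m + 1) * pi) 0"
  | m where "n = 4*m+2" "tt n = Complex 0 ((real m + 1/2) * pi)"
  | m where "n = 4*m+3" "tt n = Complex 0 (- ((real m + 1/2) * pi))"
proof (cases n rule: nat_mod4_cases)
  case (1 m) have "tt n = Complex (real m * pi) 0" unfolding 1 tt0 by (simp add: complex_eq_iff)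
  then show ?thesis using that(1)[of m] 1 by (simp add: complex_eq_iff)
next
  case (2 m) have "tt n = Complex (- (real m + 1) * pi) 0" unfolding 2 tt1 by (simp add: complex_eq_iff)
  then show ?thesis using that(2)[of m] 2 by (simp add: complex_eq_iff)
next
  case (3 m) have "tt n = Complex 0 ((real m + 1/2) * pi)" unfolding 3 tt2 by (simp add: complex_eq_iff)
  then show ?thesis using that(3)[of m] 3 by (simp add: complex_eq_iff)
next
  case (4 m) have "tt n = Complex 0 (- ((real m + 1/2) * pi))" unfolding 4 tt3 by (simp add: complex_eq_iff)
  then show ?thesis using that(4)[of m] 4 by (simp add: complex_eq_iff)
qed

lemma inj_tt: "inj tt"
proof (rule injI)
  fix x y assume eq: "tt x = tt y"
  have pi: "pi > 0" by simp
  obtain mx rx px qx where x: "x = 4*mx + rx" "tt x = Complex (pi * px) (pi * qx)" and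
     cx: "(rx = 0 \<and> px = real mx \<and> qx = 0) \<or> (rx = 1 \<and> px = - (real mx + 1) \<and> qx = 0) \<or>
          (rx = 2 \<and> px = 0 \<and> qx = real mx + 1/2) \<or> (rx = 3 \<and> px = 0 \<and> qx = - (real mx + 1/2))"
    apply (cases x rule: tt_cases)
    subgoal for m by (rule that[of m 0 "real m" 0]) (auto simp: algebra_simps)
    subgoal for m by (rule that[of m 1 "- (real m + 1)" 0]) (auto simp: algebra_simps)
    subgoal for m by (rule that[of m 2 0 "real m + 1/2"]) (auto simp: algebra_simps)
    subgoal for m by (rule that[of m 3 0 "- (real m + 1/2)"]) (auto simp: algebra_simps)
    done
  obtain my ry py qy where y: "y = 4*my + ry" "tt y = Complex (pi * py) (pi * qy)" and
     cy: "(ry = 0 \<and> py = real my \<and> qy = 0) \<or> (ry = 1 \<and> py = - (real my + 1) \<and> qy = 0) \<or>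
          (ry = 2 \<and> py = 0 \<and> qy = real my + 1/2) \<or> (ry = 3 \<and> py = 0 \<and> qy = - (real my + 1/2))"
    apply (cases y rule: tt_cases)
    subgoal for m by (rule that[of m 0 "real m" 0]) (auto simp: algebra_simps)
    subgoal for m by (rule that[of m 1 "- (real m + 1)" 0]) (auto simp: algebra_simps)
    subgoal for m by (rule that[of m 2 0 "real m + 1/2"]) (auto simp: algebra_simps)
    subgoal for m by (rule that[of m 3 0 "- (real m + 1/2)"]) (auto simp: algebra_simps)
    done
  have e: "px = py" "qx = qy" using eq x y pi by auto
  have "rx = ry \<and> mx = my"
    using cx cy e by auto
  then show "x = y" using x y by simp
qed

lemma norm_tt_lower: "norm (tt n) \<ge> (real n - 3) * pi / 4"
proof (cases n rule: tt_cases)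
  case (1 m) then show ?thesis by (simp add: norm_complex_def)
next
  case (2 m)
  have p: "pi * real m \<ge> 0" by simp
  have a: "\<bar>- pi - pi * real m\<bar> = pi + pi * real m" using p pi_gt_zero by linarith
  then show ?thesis using 2 by (simp add: norm_complex_def algebra_simps)
next
  case (3 m) then show ?thesis by (simp add: norm_complex_def algebra_simps)
next
  case (4 m)
  have p: "pi * real m \<ge> 0" by simp
  have a: "\<bar>- (pi * real m) - pi / 2\<bar> = pi * real m + pi / 2" using p pi_gt_zero by linarith
  then show ?thesis using 4 by (simp add: norm_complex_def algebra_simps)
qed


lemma exp_sum_ge: "exp (x::real) + inverse (exp x) \<ge> exp \<bar>x\<bar>"
proof (cases "x \<ge> 0")
  case True
  have "inverse (exp x) > 0" by simp
  then show ?thesis using True by (simp add: abs_of_nonneg)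
next
  case False then have "inverse (exp x) = exp \<bar>x\<bar>" by (simp add: exp_minus[symmetric] abs_of_neg)
  then show ?thesis by simp
qed

lemma exp_diff_ge: "\<bar>exp (x::real) - inverse (exp x)\<bar> \<ge> exp \<bar>x\<bar> - 1"
proof (cases "x \<ge> 0")
  case True
  have "inverse (exp x) = exp (-x)" by (simp add: exp_minus)
  then have "inverse (exp x) \<le> 1" using True by simp
  moreover have "inverse (exp x) \<le> exp x" using True
    by (metis exp_ge_zero exp_minus exp_le_cancel_iff neg_le_0_iff_le order_trans)
  ultimately show ?thesis using True by (simp add: abs_of_nonneg)
next
  case False
  have "exp x \<le> 1" using False by simp
  moreover have "inverse (exp x) = exp \<bar>x\<bar>" using False by (simp add: exp_minus[symmetric] abs_of_neg)
  ultimately show ?thesis by simp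
qed

lemma A0_has_deriv: "(A0 has_field_derivative A0' z) (at z)"
  unfolding A0_def A0'_def
  by (auto intro!: derivative_eq_intros simp: algebra_simps)

lemma A0_holo: "A0 holomorphic_on S"
  unfolding A0_def by (intro holomorphic_intros)

lemma cos_half_pi_m: "cos ((real m + 1/2) * pi) = 0"
  by (simp add: distrib_right cos_add)

lemma sin_half_pi_m: "\<bar>sin ((real m + 1/2) * pi)\<bar> = 1"
  by (simp add: distrib_right sin_add)

lemma A0'_tt_bound: "norm (A0' (tt n)) \<ge> exp (norm (tt n)) / 4"
proof -
  have real_case: "norm (A0' (of_real x)) \<ge> exp (norm (of_real x :: complex)) / 4"
    if sx: "sin x = 0" for x :: real
  proof -
    have c: "\<bar>cos x\<bar> = 1" using sx sin_cos_squared_add[of x]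
      by (simp add: abs_square_eq_1)
    have "A0' (of_real x) = of_real (cos x * ((exp x + inverse (exp x)) / 2))"
      unfolding A0'_def cosh_real[symmetric] sin_of_real cos_of_real sx of_real_mult by simp
    then have "norm (A0' (of_real x)) = \<bar>cos x\<bar> * \<bar>(exp x + inverse (exp x)) / 2\<bar>"
      by (simp only: norm_of_real abs_mult)
    also have "\<dots> = (exp x + inverse (exp x)) / 2"
      using c by (simp add: add_pos_pos)
    finally have "norm (A0' (of_real x)) = (exp x + inverse (exp x)) / 2" .
    also have "\<dots> \<ge> exp \<bar>x\<bar> / 2" using exp_sum_ge[of x] by simp
    finally have h: "exp \<bar>x\<bar> / 2 \<le> norm (A0' (of_real x))" .
    have "exp \<bar>x\<bar> > 0" by simp
    moreover have "norm (A0' (of_real x)) \<ge> 0" by simp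
    ultimately show ?thesis using h unfolding norm_of_real by linarith
  qed
  have im_case: "norm (A0' (\<i> * of_real y)) \<ge> exp (norm (\<i> * of_real y)) / 4"
    if cy: "cos y = 0" and y: "\<bar>y\<bar> \<ge> 1" for y :: real
  proof -
    have s: "\<bar>sin y\<bar> = 1" using cy sin_cos_squared_add[of y]
      by (simp add: abs_square_eq_1)
    have ii: "\<i> * (\<i> * of_real y) = - of_real y" by simp
    have si: "sin (\<i> * of_real y) = \<i> * of_real ((exp y - inverse (exp y)) / 2)"
      by (simp add: sin_i_times exp_of_real)
    have "A0' (\<i> * of_real y) = - \<i> * (\<i> * of_real ((exp y - inverse (exp y)) / 2) * sin (- of_real y))"
      unfolding A0'_def ii si by (simp add: cos_of_real cy)
    also have "\<dots> = of_real (- ((exp y - inverse (exp y)) / 2) * sin y)"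
      by (simp add: sin_of_real complex_eq_iff)
    finally have eq: "A0' (\<i> * of_real y) = of_real (- ((exp y - inverse (exp y)) / 2) * sin y)" .
    have "norm (A0' (\<i> * of_real y)) = \<bar>exp y - inverse (exp y)\<bar> / 2 * \<bar>sin y\<bar>"
      unfolding eq norm_of_real by (simp add: abs_mult)
    then have "norm (A0' (\<i> * of_real y)) = \<bar>exp y - inverse (exp y)\<bar> / 2"
      using s by simp
    also have "\<dots> \<ge> (exp \<bar>y\<bar> - 1) / 2" using exp_diff_ge[of y] by simp
    finally have 1: "norm (A0' (\<i> * of_real y)) \<ge> (exp \<bar>y\<bar> - 1) / 2" .
    have "exp \<bar>y\<bar> \<ge> 2" using exp_ge_add_one_self[of "\<bar>y\<bar>"] y by linarith
    then have "(exp \<bar>y\<bar> - 1) / 2 \<ge> exp \<bar>y\<bar> / 4" by simp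
    then show ?thesis using 1 by (simp add: norm_mult)
  qed
  have pi1: "pi / 2 \<ge> 1" using pi_gt3 by simp
  show ?thesis
  proof (cases n rule: nat_mod4_cases)
    case (1 m) show ?thesis unfolding 1 tt0 by (intro real_case) simp
  next
    case (2 m)
    have "sin (- (real m + 1) * pi) = 0"
      by (metis minus_mult_left of_nat_Suc add.commute sin_minus sin_npi neg_0_equal_iff_equal)
    then show ?thesis unfolding 2 tt1 by (intro real_case)
  next
    case (3 m)
    have e: "(real m + 1/2) * pi = pi * real m + pi / 2" by (simp add: algebra_simps)
    have "pi * real m \<ge> 0" by simp
    then have "\<bar>(real m + 1/2) * pi\<bar> \<ge> 1" unfolding e by (subst abs_of_nonneg) (use pi1 in linarith)+
    then show ?thesis unfolding 3 tt2 by (intro im_case cos_half_pi_m)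
  next
    case (4 m)
    have e: "(real m + 1/2) * pi = pi * real m + pi / 2" by (simp add: algebra_simps)
    have "pi * real m \<ge> 0" by simp
    then have "\<bar>(real m + 1/2) * pi\<bar> \<ge> 1" unfolding e by (subst abs_of_nonneg) (use pi1 in linarith)+
    have "- (\<i> * complex_of_real ((real m + 1 / 2) * pi)) = \<i> * of_real (- ((real m + 1 / 2) * pi))" by simp
    then show ?thesis unfolding 4 tt3
      by (metis \<open>1 \<le> \<bar>(real m + 1 / 2) * pi\<bar>\<close> abs_minus_cancel cos_half_pi_m cos_minus im_case)
  qed
qed


lemma rectpath_integral_bound:
  assumes int: "f contour_integrable_on rectpath a b" and B: "B \<ge> 0"
    and bd: "\<And>w. w \<in> path_image (rectpath a b) \<Longrightarrow> norm (f w) \<le> B"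
  shows "norm (contour_integral (rectpath a b) f) \<le> B * (2 * \<bar>Re b - Re a\<bar> + 2 * \<bar>Im b - Im a\<bar>)"
proof -
  define a2 where "a2 = Complex (Re b) (Im a)"
  define a4 where "a4 = Complex (Re a) (Im b)"
  have rp: "rectpath a b = linepath a a2 +++ linepath a2 b +++ linepath b a4 +++ linepath a4 a"
    unfolding rectpath_def a2_def a4_def Let_def by simp
  have v: "valid_path (linepath b a4 +++ linepath a4 a)" "valid_path (linepath a2 b +++ linepath b a4 +++ linepath a4 a)"
    by (auto intro!: valid_path_join)
  have i: "f contour_integrable_on linepath a a2" "f contour_integrable_on linepath a2 b"
      "f contour_integrable_on linepath b a4" "f contour_integrable_on linepath a4 a"
    using int unfolding rp by (auto simp: v)
  have pi: "path_image (rectpath a b) = closed_segment a a2 \<union> closed_segment a2 b \<union> closed_segment b a4 \<union> closed_segment a4 a"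
    unfolding rp by (simp add: path_image_join Un_assoc)
  have ci: "contour_integral (rectpath a b) f =
      contour_integral (linepath a a2) f + contour_integral (linepath a2 b) f +
      contour_integral (linepath b a4) f + contour_integral (linepath a4 a) f"
    unfolding rp using i v by (simp add: contour_integrable_joinI)
  have n1: "norm (contour_integral (linepath a a2) f) \<le> B * norm (a2 - a)"
    by (rule contour_integral_bound_linepath[OF i(1) B]) (use bd pi in auto)
  have n2: "norm (contour_integral (linepath a2 b) f) \<le> B * norm (b - a2)"
    by (rule contour_integral_bound_linepath[OF i(2) B]) (use bd pi in auto)
  have n3: "norm (contour_integral (linepath b a4) f) \<le> B * norm (a4 - b)"
    by (rule contour_integral_bound_linepath[OF i(3) B]) (use bd pi in auto)
  have n4: "norm (contour_integral (linepath a4 a) f) \<le> B * norm (a - a4)"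
    by (rule contour_integral_bound_linepath[OF i(4) B]) (use bd pi in auto)
  have e1: "norm (a2 - a) = \<bar>Re b - Re a\<bar>" unfolding a2_def by (simp add: norm_complex_def)
  have e2: "norm (b - a2) = \<bar>Im b - Im a\<bar>" unfolding a2_def by (simp add: norm_complex_def)
  have e3: "norm (a4 - b) = \<bar>Re b - Re a\<bar>" unfolding a4_def by (simp add: norm_complex_def abs_minus_commute)
  have e4: "norm (a - a4) = \<bar>Im b - Im a\<bar>" unfolding a4_def by (simp add: norm_complex_def abs_minus_commute)
  have "norm (contour_integral (rectpath a b) f) \<le>
      norm (contour_integral (linepath a a2) f) + norm (contour_integral (linepath a2 b) f) +
      norm (contour_integral (linepath b a4) f) + norm (contour_integral (linepath a4 a) f)"
    unfolding ci by (intro norm_triangle_le add_mono order_refl) 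
  also have "\<dots> \<le> B * norm (a2 - a) + B * norm (b - a2) + B * norm (a4 - b) + B * norm (a - a4)"
    using n1 n2 n3 n4 by linarith
  finally show ?thesis unfolding e1 e2 e3 e4 by (simp add: algebra_simps)
qed

lemma sin_norm_ge1: assumes "cos (2 * Re w) = -1" shows "norm (sin w) \<ge> 1/2"
proof -
  have "norm (sin w) ^ 2 = (exp (2 * Im w) + inverse (exp (2 * Im w)) + 2) / 4"
    using norm_sin_squared[of w] assms by simp
  also have "\<dots> \<ge> (1/2)^2"
  proof -
    have "exp (2 * Im w) > 0" "inverse (exp (2 * Im w)) > 0" by simp_all
    then show ?thesis by (simp add: field_simps power2_eq_square)
  qed
  finally show ?thesis by (rule power2_le_imp_le) simp
qed

lemma aux_ineq1: "(s - 2) / 4 \<le> (n::real) \<Longrightarrow> e \<le> s \<Longrightarrow> 3 \<le> e \<Longrightarrow> e / 16 \<le> n" by (simp add: field_simps)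
lemma aux_ineq2: "e - 1 \<le> (d::real) \<Longrightarrow> 2 \<le> e \<Longrightarrow> e / 4 \<le> d / 2" by (simp add: field_simps)
lemma abs_eq_iff': "(R::real) \<ge> 0 \<Longrightarrow> \<bar>x\<bar> = R \<longleftrightarrow> x = -R \<or> x = R" by auto

lemma sin_norm_big: assumes "\<bar>Im w\<bar> \<ge> 1" shows "norm (sin w) \<ge> exp \<bar>Im w\<bar> / 4"
proof -
  have c: "cos (2 * Re w) \<le> 1" by simp
  have "norm (sin w) ^ 2 \<ge> (exp (2 * Im w) + inverse (exp (2 * Im w)) - 2) / 4"
    using norm_sin_squared[of w] c by simp
  moreover have "exp (2 * Im w) + inverse (exp (2 * Im w)) \<ge> exp (2 * \<bar>Im w\<bar>)"
    using exp_sum_ge[of "2 * Im w"] by (simp add: abs_mult)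
  moreover have "exp (2 * \<bar>Im w\<bar>) \<ge> 3" using exp_ge_add_one_self[of "2 * \<bar>Im w\<bar>"] assms by linarith
  moreover have "(exp \<bar>Im w\<bar> / 4) ^ 2 = exp (2 * \<bar>Im w\<bar>) / 16"
    by (simp add: power2_eq_square exp_add[symmetric])
  ultimately have "(exp \<bar>Im w\<bar> / 4) ^ 2 \<le> norm (sin w) ^ 2" using aux_ineq1 by metis
  then show ?thesis by (rule power2_le_imp_le) simp
qed

lemma cosi_norm_big: assumes "\<bar>Re w\<bar> \<ge> 1" shows "norm (cos (\<i> * w)) \<ge> exp \<bar>Re w\<bar> / 4"
proof -
  have "norm (cos (\<i> * w)) ^ 2 = cos (Im w) ^ 2 + (exp (Re w) - inverse (exp (Re w))) ^ 2 / 4"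
    using norm_cos_squared[of "\<i> * w"] by simp
  also have "\<dots> \<ge> (exp (Re w) - inverse (exp (Re w))) ^ 2 / 4" by simp
  finally have 1: "norm (cos (\<i> * w)) ^ 2 \<ge> (exp (Re w) - inverse (exp (Re w))) ^ 2 / 4" .
  have 2: "\<bar>exp (Re w) - inverse (exp (Re w))\<bar> \<ge> exp \<bar>Re w\<bar> - 1" by (rule exp_diff_ge)
  have 3: "exp \<bar>Re w\<bar> \<ge> 2" using exp_ge_add_one_self[of "\<bar>Re w\<bar>"] assms by linarith
  have "exp \<bar>Re w\<bar> / 4 \<le> \<bar>exp (Re w) - inverse (exp (Re w))\<bar> / 2" using aux_ineq2[OF 2 3] .
  then have "(exp \<bar>Re w\<bar> / 4) ^ 2 \<le> (\<bar>exp (Re w) - inverse (exp (Re w))\<bar> / 2) ^ 2"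
    by (rule power_mono) simp
  also have "\<dots> = (exp (Re w) - inverse (exp (Re w))) ^ 2 / 4" by (simp add: power2_eq_square)
  finally have "(exp \<bar>Re w\<bar> / 4) ^ 2 \<le> norm (cos (\<i> * w)) ^ 2" using 1 by linarith
  then show ?thesis by (rule power2_le_imp_le) simp
qed

lemma cosi_norm_ge1: assumes "cos (Im w) ^ 2 = 1" shows "norm (cos (\<i> * w)) \<ge> 1"
proof -
  have "norm (cos (\<i> * w)) ^ 2 = cos (Im w) ^ 2 + (exp (Re w) - inverse (exp (Re w))) ^ 2 / 4"
    using norm_cos_squared[of "\<i> * w"] by simp
  also have "\<dots> \<ge> 1" using assms by simp
  finally have "1 ^ 2 \<le> norm (cos (\<i> * w)) ^ 2" by simp
  then show ?thesis by (rule power2_le_imp_le) simp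
qed

definition ra :: "nat \<Rightarrow> complex" where "ra N = Complex (- ((real N + 1/2) * pi)) (- (real N * pi))"
definition rb :: "nat \<Rightarrow> complex" where "rb N = Complex ((real N + 1/2) * pi) (real N * pi)"

lemma path_image_rect:
  "path_image (rectpath (ra N) (rb N)) =
     {w. \<bar>Re w\<bar> = (real N + 1/2) * pi \<and> \<bar>Im w\<bar> \<le> real N * pi} \<union>
     {w. \<bar>Im w\<bar> = real N * pi \<and> \<bar>Re w\<bar> \<le> (real N + 1/2) * pi}"
proof -
  have p: "0 \<le> real N * pi" "0 \<le> (real N + 1/2) * pi" by simp_all
  have le: "Re (ra N) \<le> Re (rb N)" "Im (ra N) \<le> Im (rb N)" using p by (simp_all add: ra_def rb_def)
  show ?thesis
    unfolding path_image_rectpath[OF le] abs_eq_iff'[OF p(1)] abs_eq_iff'[OF p(2)] abs_le_iff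
    by (auto simp: ra_def rb_def)
qed

lemma A0_boundary:
  assumes N: "N \<ge> 1" and w: "w \<in> path_image (rectpath (ra N) (rb N))"
  shows "norm (A0 w) \<ge> exp (real N * pi) / 8"
proof -
  have "real N * pi \<ge> 1 * 3" using N pi_gt3 by (intro mult_mono) auto
  then have Npi: "real N * pi \<ge> 1" by simp
  from w consider "\<bar>Re w\<bar> = (real N + 1/2) * pi" "\<bar>Im w\<bar> \<le> real N * pi"
    | "\<bar>Im w\<bar> = real N * pi" "\<bar>Re w\<bar> \<le> (real N + 1/2) * pi"
    unfolding path_image_rect by blast
  then show ?thesis
  proof cases
    case 1
    have "cos (2 * Re w) = -1"
    proof -
      have "Re w = -((real N + 1/2) * pi) \<or> Re w = (real N + 1/2) * pi"
        using 1(1) abs_eq_iff'[of "(real N + 1/2) * pi" "Re w"] by simp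
      then have "2 * Re w = (2 * real N + 1) * pi \<or> 2 * Re w = - ((2 * real N + 1) * pi)"
        by (auto simp: algebra_simps)
      moreover have "cos ((2 * real N + 1) * pi) = -1"
        using cos_npi[of "2*N+1"] by (simp add: algebra_simps)
      ultimately show ?thesis by auto
    qed
    then have s: "norm (sin w) \<ge> 1/2" by (rule sin_norm_ge1)
    have r: "\<bar>Re w\<bar> \<ge> real N * pi" using 1(1) by (simp add: algebra_simps)
    then have "\<bar>Re w\<bar> \<ge> 1" using Npi by linarith
    then have c: "norm (cos (\<i> * w)) \<ge> exp \<bar>Re w\<bar> / 4" by (rule cosi_norm_big)
    have "exp (real N * pi) / 8 \<le> 1/2 * (exp \<bar>Re w\<bar> / 4)" using r by simp
    also have "\<dots> \<le> norm (sin w) * norm (cos (\<i> * w))"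
      using s c by (intro mult_mono) simp_all
    finally show ?thesis by (simp add: A0_def norm_mult)
  next
    case 2
    have "cos (Im w) ^ 2 = 1"
    proof -
      have "Im w = - (real N * pi) \<or> Im w = real N * pi"
        using 2(1) abs_eq_iff'[of "real N * pi" "Im w"] by simp
      then show ?thesis by (auto simp: power_mult[symmetric])
    qed
    then have c: "norm (cos (\<i> * w)) \<ge> 1" by (rule cosi_norm_ge1)
    have "\<bar>Im w\<bar> \<ge> 1" using 2(1) Npi by linarith
    then have s: "norm (sin w) \<ge> exp \<bar>Im w\<bar> / 4" by (rule sin_norm_big)
    have "exp (real N * pi) / 8 \<le> exp \<bar>Im w\<bar> / 4 * 1" using 2(1) by simp
    also have "\<dots> \<le> norm (sin w) * norm (cos (\<i> * w))"
      using s c by (intro mult_mono) simp_all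
    finally show ?thesis by (simp add: A0_def norm_mult)
  qed
qed


definition EE :: "real \<Rightarrow> complex \<Rightarrow> complex \<Rightarrow> complex \<Rightarrow> complex" where
  "EE b \<alpha> \<beta> w = (\<alpha> * w + \<beta>) * exp (of_real b * w)"

lemma EE_holo: "EE b \<alpha> \<beta> holomorphic_on S"
  unfolding EE_def by (intro holomorphic_intros)

lemma norm_exp_bw: "norm (exp (of_real b * w)) = exp (b * Re w)"
  by simp

lemma EE_bound_gen: "norm (EE b \<alpha> \<beta> w) \<le> (norm \<alpha> * norm w + norm \<beta>) * exp (b * Re w)"
proof -
  have "norm (\<alpha> * w + \<beta>) \<le> norm \<alpha> * norm w + norm \<beta>"
    by (metis norm_mult norm_triangle_ineq)
  then show ?thesis unfolding EE_def norm_mult norm_exp_bw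
    by (intro mult_right_mono) simp_all
qed

lemma EE_bound_abs:
  assumes "\<bar>b\<bar> \<le> 1/2"
  shows "norm (EE b \<alpha> \<beta> w) \<le> (norm \<alpha> * norm w + norm \<beta>) * exp (norm w / 2)"
proof -
  have "b * Re w \<le> \<bar>b\<bar> * \<bar>Re w\<bar>" by (metis abs_ge_self abs_mult)
  also have "\<dots> \<le> 1/2 * norm w" using assms abs_Re_le_cmod[of w] by (intro mult_mono) simp_all
  finally have "exp (b * Re w) \<le> exp (norm w / 2)" by simp
  then show ?thesis using EE_bound_gen[of b \<alpha> \<beta> w]
    by (meson add_nonneg_nonneg mult_left_mono mult_nonneg_nonneg norm_ge_zero order_trans)
qed

lemma x_le_exp4: "(x::real) \<le> 4 * exp (x / 4)"
proof -
  have "1 + x/4 \<le> exp (x/4)" by (rule exp_ge_add_one_self)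
  then show ?thesis by linarith
qed

lemma coeff_decay:
  assumes b: "\<bar>b\<bar> \<le> 1/2"
  shows "norm (EE b \<alpha> \<beta> (tt n) / A0' (tt n)) \<le>
           4 * (4 * norm \<alpha> + norm \<beta>) * exp (3 * pi / 16) * exp (- pi / 16) ^ n"
proof -
  define r where "r = norm (tt n)"
  have r0: "r \<ge> 0" unfolding r_def by simp
  have rl: "r \<ge> (real n - 3) * pi / 4" unfolding r_def by (rule norm_tt_lower)
  have A: "norm (A0' (tt n)) \<ge> exp r / 4" unfolding r_def by (rule A0'_tt_bound)
  have Apos: "exp r / 4 > 0" by simp
  have E: "norm (EE b \<alpha> \<beta> (tt n)) \<le> (norm \<alpha> * r + norm \<beta>) * exp (r / 2)"
    unfolding r_def by (rule EE_bound_abs[OF b])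
  have "norm (EE b \<alpha> \<beta> (tt n) / A0' (tt n)) = norm (EE b \<alpha> \<beta> (tt n)) / norm (A0' (tt n))"
    by (simp add: norm_divide)
  also have "\<dots> \<le> (norm \<alpha> * r + norm \<beta>) * exp (r / 2) / (exp r / 4)"
    using E A Apos by (intro frac_le) (simp_all add: r0)
  also have "\<dots> = 4 * (norm \<alpha> * r + norm \<beta>) * exp (- r / 2)"
  proof -
    have "exp (r/2) / exp r = exp (- r / 2)" by (simp add: exp_diff[symmetric])
    then show ?thesis by (simp add: field_simps)
  qed
  also have "\<dots> \<le> 4 * ((4 * norm \<alpha> + norm \<beta>) * exp (r / 4)) * exp (- r / 2)"
  proof -
    have "norm \<alpha> * r \<le> norm \<alpha> * (4 * exp (r / 4))" by (intro mult_left_mono x_le_exp4) simp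
    moreover have "norm \<beta> \<le> norm \<beta> * exp (r / 4)"
    proof -
      have "1 \<le> exp (r/4)" using r0 by simp
      then show ?thesis by (metis mult_left_mono mult.right_neutral norm_ge_zero)
    qed
    ultimately have "norm \<alpha> * r + norm \<beta> \<le> (4 * norm \<alpha> + norm \<beta>) * exp (r / 4)"
      by (simp add: algebra_simps)
    then show ?thesis by (intro mult_right_mono mult_left_mono) simp_all
  qed
  also have "\<dots> = 4 * (4 * norm \<alpha> + norm \<beta>) * exp (- r / 4)"
    by (simp add: mult.assoc exp_add[symmetric])
  also have "\<dots> \<le> 4 * (4 * norm \<alpha> + norm \<beta>) * exp (- ((real n - 3) * pi / 4) / 4)"
    apply (intro mult_left_mono) using rl by (simp_all add: mult.commute)
  also have "exp (- ((real n - 3) * pi / 4) / 4) = exp (3 * pi / 16) * exp (- pi / 16) ^ n"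
  proof -
    have "- ((real n - 3) * pi / 4) / 4 = 3 * pi / 16 + real n * (- pi / 16)" by (simp add: field_simps)
    then have "exp (- ((real n - 3) * pi / 4) / 4) = exp (3 * pi / 16 + real n * (- pi / 16))" by simp
    also have "\<dots> = exp (3 * pi / 16) * exp (- pi / 16) ^ n" by (simp only: exp_add exp_of_nat_mult)
    finally show ?thesis .
  qed
  finally show ?thesis by (simp add: mult.assoc)
qed

definition rA :: "nat \<Rightarrow> complex" where "rA N = Complex (- ((real N + 3/4) * pi)) (- ((real N + 1/4) * pi))"
definition rB :: "nat \<Rightarrow> complex" where "rB N = Complex ((real N + 3/4) * pi) ((real N + 1/4) * pi)"

lemma tt_in_box:
  assumes n: "n < 4*N+1" and N: "N \<ge> 1"
  shows "tt n \<in> box (ra N) (rb N)"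
proof -
  have pi: "pi > 0" "(real N + 1/2) * pi = real N * pi + pi/2" by (simp_all add: algebra_simps)
  have em: "(real m + 1) * pi = real m * pi + pi"
    "(real m + 1/2) * pi = real m * pi + pi/2" "- (real m + 1) * pi = - (real m * pi) - pi" for m
    by (simp_all add: algebra_simps)
  show ?thesis
  proof (cases n rule: tt_cases)
    case (1 m)
    then have "m \<le> N" using n by simp
    then have f1: "real m * pi < (real N + 1/2) * pi" using pi by (intro mult_strict_right_mono) simp_all
    have f2: "0 < real N * pi" using N pi by simp
    have f3: "0 \<le> real m * pi" by simp
    show ?thesis unfolding in_box_complex_iff ra_def rb_def 1(2) complex.sel greaterThanLessThan_iff
      using f1 f2 f3 pi em[of m] by (intro conjI; smt (verit))
  next
    case (2 m)
    then have "m + 1 \<le> N" using n by simp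
    then have f1: "(real m + 1) * pi < (real N + 1/2) * pi" using pi by (intro mult_strict_right_mono) simp_all
    have f2: "0 < real N * pi" using N pi by simp
    have f3: "0 \<le> real m * pi" by simp
    show ?thesis unfolding in_box_complex_iff ra_def rb_def 2(2) complex.sel greaterThanLessThan_iff
      using f1 f2 f3 pi em[of m] by (intro conjI; smt (verit))
  next
    case (3 m)
    then have "m + 1 \<le> N" using n by simp
    then have f1: "(real m + 1/2) * pi < real N * pi" using pi by (intro mult_strict_right_mono) simp_all
    have f2: "0 < (real N + 1/2) * pi" by (intro mult_pos_pos) simp_all
    have f3: "0 \<le> real m * pi" by simp
    show ?thesis unfolding in_box_complex_iff ra_def rb_def 3(2) complex.sel greaterThanLessThan_iff
      using f1 f2 f3 pi em[of m] by (intro conjI; smt (verit))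
  next
    case (4 m)
    then have "m + 1 \<le> N" using n by simp
    then have f1: "(real m + 1/2) * pi < real N * pi" using pi by (intro mult_strict_right_mono) simp_all
    have f2: "0 < (real N + 1/2) * pi" by (intro mult_pos_pos) simp_all
    have f3: "0 \<le> real m * pi" by simp
    show ?thesis unfolding in_box_complex_iff ra_def rb_def 4(2) complex.sel greaterThanLessThan_iff
      using f1 f2 f3 pi em[of m] by (intro conjI; smt (verit))
  qed
qed

lemma tt_in_big_box:
  assumes "tt n \<in> box (rA N) (rB N)"
  shows "n < 4*N+1"
proof -
  have pi: "pi > 0" by simp
  show ?thesis
  proof (cases n rule: tt_cases)
    case (1 m)
    then have "real m * pi < (real N + 3/4) * pi" using assms by (simp add: in_box_complex_iff rA_def rB_def)
    then have "real m < real N + 3/4" using pi by simp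
    then have "m \<le> N" by linarith
    then show ?thesis using 1 by simp
  next
    case (2 m)
    then have "- ((real N + 3/4) * pi) < - (real m + 1) * pi" using assms by (simp add: in_box_complex_iff rA_def rB_def)
    then have "(real m + 1) * pi < (real N + 3/4) * pi" by linarith
    then have "real m + 1 < real N + 3/4" using pi by simp
    then have "m + 1 \<le> N" by linarith
    then show ?thesis using 2 by simp
  next
    case (3 m)
    then have "(real m + 1/2) * pi < (real N + 1/4) * pi" using assms by (simp add: in_box_complex_iff rA_def rB_def)
    then have "real m + 1/2 < real N + 1/4" using pi by simp
    then have "m + 1 \<le> N" by linarith
    then show ?thesis using 3 by simp
  next
    case (4 m)
    then have "- ((real N + 1/4) * pi) < - ((real m + 1/2) * pi)" using assms by (simp add: in_box_complex_iff rA_def rB_def)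
    then have "(real m + 1/2) * pi < (real N + 1/4) * pi" by linarith
    then have "real m + 1/2 < real N + 1/4" using pi by simp
    then have "m + 1 \<le> N" by linarith
    then show ?thesis using 4 by simp
  qed
qed


lemma open_A0_nz: "open {w. A0 w \<noteq> 0}"
  by (rule open_Collect_neq) (auto intro!: holomorphic_on_imp_continuous_on A0_holo continuous_intros)

lemma A0'_tt_nz: "A0' (tt n) \<noteq> 0"
proof -
  have "0 < exp (norm (tt n)) / 4" by simp
  also have "\<dots> \<le> norm (A0' (tt n))" by (rule A0'_tt_bound)
  finally show ?thesis by auto
qed

lemma tt_tendsto: "filterlim (\<lambda>n. norm (tt n)) at_top sequentially"
proof (rule filterlim_at_top_mono[OF _ always_eventually])
  show "filterlim (\<lambda>n. (real n - 3) * pi / 4) at_top sequentially" by real_asymp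
  show "\<forall>n. (real n - 3) * pi / 4 \<le> norm (tt n)" using norm_tt_lower by blast
qed

definition fint where "fint b \<alpha> \<beta> z w = EE b \<alpha> \<beta> w / (A0 w * (w - z))"

lemma residue_at_z:
  assumes "A0 z \<noteq> 0"
  shows "residue (fint b \<alpha> \<beta> z) z = EE b \<alpha> \<beta> z / A0 z"
proof -
  have eq: "fint b \<alpha> \<beta> z = (\<lambda>w. (EE b \<alpha> \<beta> w / A0 w) / (w - z))"
    by (auto simp: fint_def fun_eq_iff divide_divide_eq_left)
  have "residue (\<lambda>w. (EE b \<alpha> \<beta> w / A0 w) / (w - z)) z = EE b \<alpha> \<beta> z / A0 z"
    by (rule residue_simple[OF open_A0_nz]) (use assms in \<open>auto intro!: holomorphic_intros EE_holo A0_holo\<close>)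
  then show ?thesis using eq by simp
qed

lemma residue_at_tt:
  assumes z: "z \<notin> range tt" and nz: "EE b \<alpha> \<beta> (tt n) \<noteq> 0"
  shows "residue (fint b \<alpha> \<beta> z) (tt n) = - (EE b \<alpha> \<beta> (tt n) / (A0' (tt n) * (z - tt n)))"
proof -
  define t where "t = tt n"
  have eq: "fint b \<alpha> \<beta> z = (\<lambda>w. (EE b \<alpha> \<beta> w / (w - z)) / A0 w)"
    by (auto simp: fint_def fun_eq_iff divide_divide_eq_left mult.commute)
  have tz: "t \<noteq> z" using z unfolding t_def by auto
  define r where "r = dist t z"
  have r: "r > 0" using tz unfolding r_def by simp
  have zb: "z \<notin> ball t r" unfolding r_def by simp
  have "residue (\<lambda>w. (EE b \<alpha> \<beta> w / (w - z)) / A0 w) t = (EE b \<alpha> \<beta> t / (t - z)) / A0' t"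
  proof (rule residue_simple_pole_deriv[where s = "ball t r"])
    show "(\<lambda>w. EE b \<alpha> \<beta> w / (w - z)) holomorphic_on ball t r"
      using zb by (auto intro!: holomorphic_intros EE_holo)
    show "A0 holomorphic_on ball t r" by (rule A0_holo)
    show "open (ball t r)" by simp
    show "connected (ball t r)" by simp
    show "t \<in> ball t r" using r by simp
    show "(A0 has_field_derivative A0' t) (at t)" by (rule A0_has_deriv)
    show "EE b \<alpha> \<beta> t / (t - z) \<noteq> 0" using nz tz unfolding t_def by simp
    show "A0 t = 0" unfolding t_def using A0_zero_iff by auto
    show "A0' t \<noteq> 0" unfolding t_def by (rule A0'_tt_nz)
  qed
  also have "\<dots> = - (EE b \<alpha> \<beta> t / (A0' t * (z - t)))"
  proof -
    have a: "A0' t \<noteq> 0" unfolding t_def by (rule A0'_tt_nz)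
    have "t - z \<noteq> 0" "z - t \<noteq> 0" using tz by auto
    then show ?thesis using a by (simp add: field_simps)
  qed
  finally show ?thesis using eq unfolding t_def by simp
qed


lemma contour_step:
  assumes b: "\<bar>b\<bar> \<le> 1/2" and nz: "\<And>n. EE b \<alpha> \<beta> (tt n) \<noteq> 0" and z: "z \<notin> range tt"
    and N: "N \<ge> 1" and Nz: "real N * pi \<ge> norm z + 1"
  shows "norm (2 * pi * \<i> * (EE b \<alpha> \<beta> z / A0 z - (\<Sum>n<4*N+1. EE b \<alpha> \<beta> (tt n) / (A0' (tt n) * (z - tt n)))))
     \<le> (norm \<alpha> + norm \<beta>) * ((2 * real N + 2) * pi * exp ((real N + 1/2) * pi / 2) * 8 / exp (real N * pi))
        * ((8 * real N + 2) * pi)"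
proof -
  define g where "g = rectpath (ra N) (rb N)"
  define S where "S = box (rA N) (rB N)"
  define pts where "pts = insert z (tt ` {..<4*N+1})"
  define f where "f = fint b \<alpha> \<beta> z"
  have pi: "pi > 0" by simp
  have Az: "A0 z \<noteq> 0" using z A0_zero_iff by auto
  have le: "Re (ra N) \<le> Re (rb N)" "Im (ra N) \<le> Im (rb N)" by (simp_all add: ra_def rb_def)
  have zbox: "z \<in> box (ra N) (rb N)"
  proof -
    have "\<bar>Re z\<bar> < real N * pi" "\<bar>Im z\<bar> < real N * pi"
      using abs_Re_le_cmod[of z] abs_Im_le_cmod[of z] Nz by linarith+
    moreover have "real N * pi \<le> (real N + 1/2) * pi" using pi by (simp add: algebra_simps)
    ultimately show ?thesis unfolding in_box_complex_iff ra_def rb_def complex.sel greaterThanLessThan_iff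
      by (intro conjI; linarith)
  qed
  have cbS: "cbox (ra N) (rb N) \<subseteq> S"
  proof
    fix w assume "w \<in> cbox (ra N) (rb N)"
    then have w: "- ((real N + 1/2) * pi) \<le> Re w" "Re w \<le> (real N + 1/2) * pi"
      "- (real N * pi) \<le> Im w" "Im w \<le> real N * pi"
      unfolding in_cbox_complex_iff ra_def rb_def by auto
    have "(real N + 1/2) * pi < (real N + 3/4) * pi" "real N * pi < (real N + 1/4) * pi"
      using pi by (simp_all add: algebra_simps)
    then show "w \<in> S" unfolding S_def in_box_complex_iff rA_def rB_def complex.sel greaterThanLessThan_iff
      using w by (intro conjI; linarith)
  qed
  have pimg: "path_image g \<subseteq> cbox (ra N) (rb N)"
    unfolding g_def by (rule path_image_rectpath_subset_cbox[OF le])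
  have A0nz: "A0 w \<noteq> 0" if "w \<in> path_image g" for w
  proof -
    have "0 < exp (real N * pi) / 8" by simp
    also have "\<dots> \<le> norm (A0 w)" using A0_boundary[OF N] that unfolding g_def by blast
    finally show ?thesis by auto
  qed
  have zpath: "z \<notin> path_image g"
    using path_image_rectpath_inter_box[OF le] zbox unfolding g_def by blast
  have holo_big: "f holomorphic_on ({w. A0 w \<noteq> 0} - {z})"
    unfolding f_def fint_def by (auto intro!: holomorphic_intros EE_holo A0_holo)
  have open_big: "open ({w. A0 w \<noteq> 0} - {z})" using open_A0_nz by auto
  have holo: "f holomorphic_on S - pts"
  proof (rule holomorphic_on_subset[OF holo_big])
    show "S - pts \<subseteq> {w. A0 w \<noteq> 0} - {z}"
    proof
      fix w assume w: "w \<in> S - pts"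
      have "A0 w \<noteq> 0"
      proof
        assume "A0 w = 0"
        then obtain n where n: "w = tt n" using A0_zero_iff by auto
        then have "n < 4*N+1" using w tt_in_big_box unfolding S_def by blast
        then show False using w n unfolding pts_def by auto
      qed
      then show "w \<in> {w. A0 w \<noteq> 0} - {z}" using w unfolding pts_def by auto
    qed
  qed
  have pS: "path_image g \<subseteq> S - pts"
  proof
    fix w assume w: "w \<in> path_image g"
    have "w \<in> S" using w pimg cbS by blast
    moreover have "w \<noteq> z" using w zpath by auto
    moreover have "w \<notin> tt ` {..<4*N+1}"
    proof
      assume "w \<in> tt ` {..<4*N+1}"
      then have "A0 w = 0" using A0_zero_iff by auto
      then show False using A0nz[OF w] by simp
    qed
    ultimately show "w \<in> S - pts" unfolding pts_def by auto
  qed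
  have homo: "\<forall>w. w \<notin> S \<longrightarrow> winding_number g w = 0"
  proof (intro allI impI)
    fix w assume "w \<notin> S"
    then have "w \<notin> cbox (ra N) (rb N)" using cbS by blast
    then show "winding_number g w = 0" unfolding g_def by (rule winding_number_rectpath_outside[OF le])
  qed
  have RT: "contour_integral g f = 2 * pi * \<i> * (\<Sum>p\<in>pts. winding_number g p * residue f p)"
  proof (rule Residue_theorem)
    show "open S" unfolding S_def by (rule open_box)
    show "connected S" unfolding S_def by (simp add: convex_connected)
    show "finite pts" unfolding pts_def by simp
    show "f holomorphic_on S - pts" by (rule holo)
    show "valid_path g" unfolding g_def by simp
    show "pathfinish g = pathstart g" unfolding g_def by simp
    show "path_image g \<subseteq> S - pts" by (rule pS)
    show "\<forall>w. w \<notin> S \<longrightarrow> winding_number g w = 0" by (rule homo)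
  qed
  have wn1: "winding_number g p = 1" if "p \<in> pts" for p
  proof -
    have "p \<in> box (ra N) (rb N)" using that zbox tt_in_box[OF _ N] unfolding pts_def by auto
    then show ?thesis unfolding g_def by (rule winding_number_rectpath)
  qed
  define c where "c n = EE b \<alpha> \<beta> (tt n) / (A0' (tt n) * (z - tt n))" for n
  have "(\<Sum>p\<in>pts. winding_number g p * residue f p) = (\<Sum>p\<in>pts. residue f p)"
    using wn1 by simp
  also have "\<dots> = residue f z + (\<Sum>p\<in>tt ` {..<4*N+1}. residue f p)"
    unfolding pts_def using z by (subst sum.insert) auto
  also have "(\<Sum>p\<in>tt ` {..<4*N+1}. residue f p) = (\<Sum>n<4*N+1. residue f (tt n))"
    using inj_tt by (subst sum.reindex) (auto intro: inj_on_subset)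
  also have "\<dots> = (\<Sum>n<4*N+1. - c n)"
    unfolding f_def c_def using residue_at_tt[OF z nz] by simp
  also have "residue f z = EE b \<alpha> \<beta> z / A0 z" unfolding f_def by (rule residue_at_z[OF Az])
  finally have CI: "contour_integral g f = 2 * pi * \<i> * (EE b \<alpha> \<beta> z / A0 z - (\<Sum>n<4*N+1. c n))"
    using RT by (simp add: sum_negf)
  define B where "B = (norm \<alpha> + norm \<beta>) * ((2 * real N + 2) * pi * exp ((real N + 1/2) * pi / 2) * 8 / exp (real N * pi))"
  have B0: "B \<ge> 0" unfolding B_def by simp
  have int: "f contour_integrable_on g"
    by (rule contour_integrable_holomorphic_simple[OF holo_big open_big]) 
       (use pS A0nz zpath in \<open>auto simp: g_def\<close>)
  have bd: "norm (f w) \<le> B" if w: "w \<in> path_image g" for w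
  proof -
    have wr: "\<bar>Re w\<bar> \<le> (real N + 1/2) * pi" "\<bar>Im w\<bar> \<le> real N * pi"
      and wb: "\<bar>Re w\<bar> = (real N + 1/2) * pi \<or> \<bar>Im w\<bar> = real N * pi"
      using w unfolding g_def path_image_rect by (auto simp: algebra_simps)
    have NN: "real N * pi \<le> (real N + 1/2) * pi" using pi by (simp add: algebra_simps)
    have wN: "norm w \<ge> real N * pi"
      using wb abs_Re_le_cmod[of w] abs_Im_le_cmod[of w] NN by linarith
    have wz: "norm (w - z) \<ge> 1"
      using norm_triangle_ineq2[of w z] wN Nz by linarith
    have wle: "norm w \<le> (2 * real N + 2) * pi"
    proof -
      have "norm w \<le> \<bar>Re w\<bar> + \<bar>Im w\<bar>" by (rule cmod_le)
      also have "\<dots> \<le> (real N + 1/2) * pi + real N * pi" using wr by linarith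
      also have "\<dots> \<le> (2 * real N + 2) * pi" using pi by (simp add: algebra_simps)
      finally show ?thesis .
    qed
    have "1 * 1 \<le> (2 * real N + 2) * pi" using pi_gt3 by (intro mult_mono) simp_all
    then have big1: "(2 * real N + 2) * pi \<ge> 1" by simp
    have P: "norm \<alpha> * norm w + norm \<beta> \<le> (norm \<alpha> + norm \<beta>) * ((2 * real N + 2) * pi)"
    proof -
      have "norm \<alpha> * norm w \<le> norm \<alpha> * ((2 * real N + 2) * pi)" using wle by (simp add: mult_left_mono)
      moreover have "norm \<beta> \<le> norm \<beta> * ((2 * real N + 2) * pi)" using big1
        by (metis mult_left_mono mult.right_neutral norm_ge_zero)
      ultimately show ?thesis by (simp add: algebra_simps)
    qed
    have X: "exp (b * Re w) \<le> exp ((real N + 1/2) * pi / 2)"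
    proof -
      have "b * Re w \<le> \<bar>b\<bar> * \<bar>Re w\<bar>" by (metis abs_ge_self abs_mult)
      also have "\<dots> \<le> 1/2 * ((real N + 1/2) * pi)" using b wr by (intro mult_mono) simp_all
      finally show ?thesis by simp
    qed
    have E: "norm (EE b \<alpha> \<beta> w) \<le> (norm \<alpha> + norm \<beta>) * ((2 * real N + 2) * pi) * exp ((real N + 1/2) * pi / 2)"
      using EE_bound_gen[of b \<alpha> \<beta> w] P X
      by (meson mult_mono order_trans add_nonneg_nonneg mult_nonneg_nonneg norm_ge_zero exp_ge_zero)
    have A: "norm (A0 w) \<ge> exp (real N * pi) / 8" using A0_boundary[OF N] w unfolding g_def by blast
    have D: "norm (A0 w * (w - z)) \<ge> exp (real N * pi) / 8"
    proof -
      have "exp (real N * pi) / 8 * 1 \<le> norm (A0 w) * norm (w - z)"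
        using A wz by (intro mult_mono) simp_all
      then show ?thesis by (simp add: norm_mult)
    qed
    have "norm (f w) = norm (EE b \<alpha> \<beta> w) / norm (A0 w * (w - z))"
      unfolding f_def fint_def by (simp add: norm_divide)
    also have "\<dots> \<le> (norm \<alpha> + norm \<beta>) * ((2 * real N + 2) * pi) * exp ((real N + 1/2) * pi / 2) / (exp (real N * pi) / 8)"
      using E D by (intro frac_le) simp_all
    also have "\<dots> = B" unfolding B_def by (simp add: field_simps)
    finally show ?thesis .
  qed
  have "norm (contour_integral g f) \<le> B * (2 * \<bar>Re (rb N) - Re (ra N)\<bar> + 2 * \<bar>Im (rb N) - Im (ra N)\<bar>)"
    unfolding g_def by (rule rectpath_integral_bound[OF int[unfolded g_def] B0 bd[unfolded g_def]])
  also have "2 * \<bar>Re (rb N) - Re (ra N)\<bar> + 2 * \<bar>Im (rb N) - Im (ra N)\<bar> = (8 * real N + 2) * pi"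
    unfolding ra_def rb_def using pi by (simp add: algebra_simps abs_of_nonneg)
  finally have "norm (contour_integral g f) \<le> B * ((8 * real N + 2) * pi)" .
  then show ?thesis using CI unfolding c_def B_def by simp
qed


lemma interp:
  assumes b: "\<bar>b\<bar> \<le> 1/2" and nz: "\<And>n. EE b \<alpha> \<beta> (tt n) \<noteq> 0" and z: "z \<notin> range tt"
  shows "(\<lambda>n. EE b \<alpha> \<beta> (tt n) / (A0' (tt n) * (z - tt n))) sums (EE b \<alpha> \<beta> z / A0 z)"
proof -
  define c where "c n = EE b \<alpha> \<beta> (tt n) / (A0' (tt n) * (z - tt n))" for n
  define K where "K = 4 * (4 * norm \<alpha> + norm \<beta>) * exp (3 * pi / 16)"
  have ev1: "eventually (\<lambda>n. norm (tt n) \<ge> norm z + 1) sequentially"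
    using tt_tendsto by (simp add: filterlim_at_top)
  have ev: "eventually (\<lambda>n. norm (c n) \<le> K * exp (- pi / 16) ^ n) sequentially"
    using ev1
  proof eventually_elim
    case (elim n)
    have "norm (z - tt n) \<ge> 1" using norm_triangle_ineq2[of "tt n" z] norm_minus_commute[of z "tt n"] elim by linarith
    have "norm (c n) = norm (EE b \<alpha> \<beta> (tt n) / A0' (tt n)) / norm (z - tt n)"
      using z unfolding c_def by (auto simp: norm_divide norm_mult)
    also have "\<dots> \<le> norm (EE b \<alpha> \<beta> (tt n) / A0' (tt n)) / 1"
    proof (rule divide_left_mono)
      show "1 \<le> norm (z - tt n)" by fact
      show "0 < norm (z - tt n) * 1" using z by auto
    qed simp
    also have "\<dots> \<le> K * exp (- pi / 16) ^ n" unfolding K_def using coeff_decay[OF b] by simp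
    finally show ?case .
  qed
  have sg: "summable (\<lambda>n. K * exp (- pi / 16) ^ n)"
    by (intro summable_mult summable_geometric) simp
  have sc: "summable c" by (rule summable_comparison_test_ev[OF ev sg])
  define Bd where "Bd N = (norm \<alpha> + norm \<beta>) * ((2 * real N + 2) * pi * exp ((real N + 1/2) * pi / 2) * 8 / exp (real N * pi))
        * ((8 * real N + 2) * pi)" for N
  have g0: "((\<lambda>x::real. (2 * x + 2) * pi * exp ((x + 1/2) * pi / 2) * 8 / exp (x * pi) * ((8 * x + 2) * pi)) \<longlongrightarrow> 0) at_top"
    by real_asymp
  have "((\<lambda>N. (2 * real N + 2) * pi * exp ((real N + 1/2) * pi / 2) * 8 / exp (real N * pi) * ((8 * real N + 2) * pi)) \<longlongrightarrow> 0) sequentially"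
    using filterlim_compose[OF g0 filterlim_real_sequentially] by (simp add: o_def)
  then have "(\<lambda>N. (norm \<alpha> + norm \<beta>) * ((2 * real N + 2) * pi * exp ((real N + 1/2) * pi / 2) * 8 / exp (real N * pi) * ((8 * real N + 2) * pi))) \<longlonglongrightarrow> 0"
    by (rule tendsto_mult_right_zero)
  moreover have "Bd = (\<lambda>N. (norm \<alpha> + norm \<beta>) * ((2 * real N + 2) * pi * exp ((real N + 1/2) * pi / 2) * 8 / exp (real N * pi) * ((8 * real N + 2) * pi)))"
    unfolding Bd_def by (simp only: mult.assoc)
  ultimately have Bd0: "Bd \<longlonglongrightarrow> 0" by simp
  have evN: "eventually (\<lambda>N. N \<ge> 1 \<and> real N * pi \<ge> norm z + 1) sequentially"
  proof -
    have "eventually (\<lambda>N. real N * pi \<ge> norm z + 1) sequentially"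
    proof -
      have "filterlim (\<lambda>N. real N * pi) at_top sequentially" by real_asymp
      then show ?thesis by (simp add: filterlim_at_top)
    qed
    moreover have "eventually (\<lambda>N. N \<ge> 1) sequentially" by (rule eventually_ge_at_top)
    ultimately show ?thesis by eventually_elim simp
  qed
  have "((\<lambda>N. 2 * pi * \<i> * (EE b \<alpha> \<beta> z / A0 z - (\<Sum>n<4*N+1. c n))) \<longlongrightarrow> 0) sequentially"
  proof (rule Lim_null_comparison[OF _ Bd0])
    show "eventually (\<lambda>N. norm (2 * pi * \<i> * (EE b \<alpha> \<beta> z / A0 z - (\<Sum>n<4*N+1. c n))) \<le> Bd N) sequentially"
      using evN
    proof eventually_elim
      case (elim N)
      then show ?case unfolding Bd_def c_def using contour_step[OF b nz z] by blast
    qed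
  qed
  then have lim0: "((\<lambda>N. 2 * pi * \<i> * (EE b \<alpha> \<beta> z / A0 z - (\<Sum>n<4*N+1. c n))) \<longlongrightarrow> 0) sequentially" .
  define C :: complex where "C = 2 * pi * \<i>"
  define D where "D N = EE b \<alpha> \<beta> z / A0 z - (\<Sum>n<4*N+1. c n)" for N
  have Cnz: "C \<noteq> 0" unfolding C_def by simp
  have "(\<lambda>N. C * D N) \<longlonglongrightarrow> 0" using lim0 unfolding C_def D_def by simp
  then have "(\<lambda>N. inverse C * (C * D N)) \<longlonglongrightarrow> inverse C * 0" by (intro tendsto_mult tendsto_const)
  moreover have "(\<lambda>N. inverse C * (C * D N)) = D" using Cnz by (simp add: fun_eq_iff)
  ultimately have "D \<longlonglongrightarrow> 0" by simp
  then have "((\<lambda>N. EE b \<alpha> \<beta> z / A0 z - (\<Sum>n<4*N+1. c n)) \<longlongrightarrow> 0) sequentially"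
    unfolding D_def .
  then have "((\<lambda>N. EE b \<alpha> \<beta> z / A0 z - (EE b \<alpha> \<beta> z / A0 z - (\<Sum>n<4*N+1. c n))) \<longlongrightarrow> EE b \<alpha> \<beta> z / A0 z - 0) sequentially"
    by (intro tendsto_diff tendsto_const)
  then have L1: "((\<lambda>N. (\<Sum>n<4*N+1. c n)) \<longlongrightarrow> EE b \<alpha> \<beta> z / A0 z) sequentially"
    by simp
  have "(\<lambda>n. \<Sum>i<n. c i) \<longlonglongrightarrow> suminf c" using sc by (rule summable_LIMSEQ)
  moreover have "strict_mono (\<lambda>N::nat. 4*N+1)" by (rule strict_monoI) simp
  ultimately have L2: "((\<lambda>N. (\<Sum>n<4*N+1. c n)) \<longlongrightarrow> suminf c) sequentially"
    using LIMSEQ_subseq_LIMSEQ unfolding o_def by blast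
  have "suminf c = EE b \<alpha> \<beta> z / A0 z" using LIMSEQ_unique[OF L2 L1] .
  then show ?thesis using sc unfolding c_def by (metis summable_sums)
qed


lemma AA_has_deriv: "(AA has_field_derivative (2 * z * exp (z^2) * A0 z + exp (z^2) * A0' z)) (at z)"
  unfolding AA_def
  by (auto intro!: derivative_eq_intros A0_has_deriv simp: algebra_simps)

lemma deriv_AA_tt: "deriv AA (tt n) = exp ((tt n)^2) * A0' (tt n)"
proof -
  have "A0 (tt n) = 0" using A0_zero_iff by auto
  then show ?thesis using DERIV_imp_deriv[OF AA_has_deriv[of "tt n"]] by simp
qed

lemma deriv_AA_nz: "deriv AA (tt n) \<noteq> 0"
  using A0'_tt_nz by (simp add: deriv_AA_tt)

lemma AA_holo: "AA holomorphic_on S"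
  unfolding AA_def by (intro holomorphic_intros A0_holo)

lemma AA_zero_iff: "AA z = 0 \<longleftrightarrow> z \<in> range tt"
  unfolding AA_def using A0_zero_iff by simp

lemma aux_lin9: "40 \<le> 2 * x - (y::real) \<Longrightarrow> p < 4 \<Longrightarrow> y \<le> 2 * (x - 3 * p)" by (simp add: algebra_simps)

lemma tt_powr_bound: "eventually (\<lambda>n. norm (tt n) powr (-2) \<le> 64 * real n powr (-2)) sequentially"
  using eventually_ge_at_top[of 8]
proof eventually_elim
  case (elim n)
  have "real n * (2 * pi - 1) \<ge> 8 * (2 * 3 - 1)" using elim pi_gt3
    by (intro mult_mono) auto
  then have "2 * (pi * real n) - real n \<ge> 40" by (simp add: algebra_simps)
  then have "2 * (pi * real n - 3 * pi) \<ge> real n" using pi_less_4 by (rule aux_lin9)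
  then have h: "(real n - 3) * pi / 4 \<ge> real n / 8"
    by (simp add: field_simps)
  have pos: "real n / 8 > 0" using elim by simp
  have "real n / 8 \<le> norm (tt n)" using h norm_tt_lower[of n] by linarith
  then have "norm (tt n) powr (-2) \<le> (real n / 8) powr (-2)"
    using pos by (intro powr_mono2') simp_all
  also have "\<dots> = 64 * real n powr (-2)"
    using pos by (simp add: powr_divide powr_minus divide_simps)
  finally show ?case .
qed

lemma summable_tt_powr: "summable (\<lambda>n. norm (tt n) powr (-2))"
proof (rule summable_comparison_test_ev)
  show "eventually (\<lambda>n. norm (norm (tt n) powr (-2)) \<le> 64 * real n powr (-2)) sequentially"
    using tt_powr_bound by simp
  show "summable (\<lambda>n. 64 * real n powr (-2))"
    by (intro summable_mult) (simp add: summable_real_powr_iff)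
qed

lemma cdb_data_ok: "cdb_data tt AA (\<lambda>_. 1)"
  unfolding cdb_data_def
proof (intro conjI)
  show "inj tt" by (rule inj_tt)
  show "filterlim (\<lambda>n. norm (tt n)) at_top sequentially" by (rule tt_tendsto)
  show "\<exists>p>0. summable (\<lambda>n. if tt n = 0 then 0 else norm (tt n) powr - p)"
  proof (intro exI conjI)
    show "(2::real) > 0" by simp
    show "summable (\<lambda>n. if tt n = 0 then 0 else norm (tt n) powr - 2)"
      by (rule summable_comparison_test[OF _ summable_tt_powr]) auto
  qed
  show "AA holomorphic_on UNIV" by (rule AA_holo)
  show "{z. AA z = 0} = range tt" using AA_zero_iff by auto
  show "\<forall>n. deriv AA (tt n) \<noteq> 0" using deriv_AA_nz by blast
  show "\<forall>n. (0::real) < 1" by simp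
  show "summable (\<lambda>n. 1 / ((norm (tt n))\<^sup>2 + 1))"
  proof (rule summable_comparison_test_ev[OF _ summable_tt_powr])
    show "eventually (\<lambda>n. norm (1 / ((norm (tt n))\<^sup>2 + 1)) \<le> norm (tt n) powr (-2)) sequentially"
      using eventually_ge_at_top[of 4]
    proof eventually_elim
      case (elim n)
      have "norm (tt n) \<ge> (real n - 3) * pi / 4" by (rule norm_tt_lower)
      moreover have "(real n - 3) * pi / 4 > 0" using elim by simp
      ultimately have p: "norm (tt n) > 0" by linarith
      have "1 / ((norm (tt n))\<^sup>2 + 1) \<le> 1 / (norm (tt n))\<^sup>2"
        using p by (intro frac_le) simp_all
      also have "\<dots> = norm (tt n) powr (-2)" using p by (simp add: powr_minus divide_simps)
      finally show ?case by simp
    qed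
  qed
qed


lemma norm_sin_le_exp: "norm (sin (z::complex)) \<le> exp (norm z)"
proof -
  have "norm (sin z) = norm (exp (\<i> * z) - exp (- (\<i> * z))) / 2"
    unfolding sin_exp_eq by (simp add: norm_divide norm_mult)
  also have "\<dots> \<le> (norm (exp (\<i> * z)) + norm (exp (- (\<i> * z)))) / 2"
    by (intro divide_right_mono norm_triangle_ineq4) simp
  also have "\<dots> \<le> (exp (norm z) + exp (norm z)) / 2"
  proof -
    have a: "norm (exp (\<i> * z)) \<le> exp (norm z)" using abs_Im_le_cmod[of z] by simp
    have b: "norm (exp (- (\<i> * z))) \<le> exp (norm z)" using abs_Im_le_cmod[of z] by simp
    show ?thesis by (rule divide_right_mono[OF add_mono[OF a b]]) simp
  qed
  finally show ?thesis by simp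
qed

lemma AA_upper: "norm (AA z) \<le> exp ((norm z)^2 + 2 * norm z)"
proof -
  have "norm (AA z) = norm (exp (z^2)) * norm (sin z) * norm (cos (\<i> * z))"
    unfolding AA_def A0_def by (simp add: norm_mult)
  also have "\<dots> \<le> exp ((norm z)^2) * exp (norm z) * exp (norm z)"
  proof (intro mult_mono)
    show "norm (exp (z^2)) \<le> exp ((norm z)^2)" using norm_exp[of "z^2"] by (simp add: norm_power)
    show "norm (sin z) \<le> exp (norm z)" by (rule norm_sin_le_exp)
    show "norm (cos (\<i> * z)) \<le> exp (norm z)" using norm_cos_le[of "\<i> * z"] by (simp add: norm_mult)
  qed simp_all
  also have "\<dots> = exp ((norm z)^2 + 2 * norm z)" by (simp add: exp_add[symmetric])
  finally show ?thesis .
qed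

lemma aux_half: "2 \<le> a \<Longrightarrow> 0 < b \<Longrightarrow> 1 \<le> (a + b) / (2::real)" by (simp add: field_simps)

lemma has_order_AA: "has_order AA 2"
  unfolding has_order_def
proof (intro conjI allI impI)
  fix l :: real assume l: "l > 2"
  define R where "R = max 1 (3 powr (1 / (l - 2)))"
  show "\<exists>R. \<forall>z. R \<le> norm z \<longrightarrow> norm (AA z) \<le> exp (norm z powr l)"
  proof (intro exI allI impI)
    fix z :: complex assume z: "R \<le> norm z"
    define r where "r = norm z"
    have r1: "r \<ge> 1" using z unfolding R_def r_def by simp
    have r3: "r \<ge> 3 powr (1 / (l - 2))" using z unfolding R_def r_def by simp
    have "r powr (l - 2) \<ge> (3 powr (1 / (l - 2))) powr (l - 2)"
      using r3 l by (intro powr_mono2) simp_all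
    also have "(3 powr (1 / (l - 2))) powr (l - 2) = 3" using l by (simp add: powr_powr)
    finally have p3: "r powr (l - 2) \<ge> 3" .
    have "r powr l = r powr (2 + (l - 2))" by simp
    also have "\<dots> = r powr 2 * r powr (l - 2)" by (rule powr_add)
    also have "r powr 2 = r^2" using r1 by simp
    finally have "r powr l = r^2 * r powr (l - 2)" .
    moreover have "r^2 * 3 \<le> r^2 * r powr (l - 2)" using p3 by (intro mult_left_mono) simp_all
    moreover have "r^2 + 2 * r \<le> r^2 * 3" using r1 by (simp add: power2_eq_square algebra_simps)
    ultimately have "r^2 + 2 * r \<le> r powr l" by linarith
    then have "exp (r^2 + 2 * r) \<le> exp (r powr l)" by simp
    then show "norm (AA z) \<le> exp (norm z powr l)" using AA_upper[of z] unfolding r_def by linarith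
  qed
next
  fix l :: real assume l: "l < 2"
  show "\<not> (\<exists>R. \<forall>z. R \<le> norm z \<longrightarrow> norm (AA z) \<le> exp (norm z powr l))"
  proof
    assume "\<exists>R. \<forall>z. R \<le> norm z \<longrightarrow> norm (AA z) \<le> exp (norm z powr l)"
    then obtain R where R: "\<And>z. R \<le> norm z \<Longrightarrow> norm (AA z) \<le> exp (norm z powr l)" by blast
    define k :: nat where "k = nat (ceiling R) + 1"
    define x where "x = (2 * real k + 1/2) * pi"
    have k1: "real k \<ge> 1" unfolding k_def by simp
    have kR: "real k \<ge> R" unfolding k_def by linarith
    have "(2 * real k + 1/2) * 3 \<le> (2 * real k + 1/2) * pi" using pi_gt3 by (intro mult_left_mono) simp_all
    then have x1: "x \<ge> 2 * real k" unfolding x_def by (simp add: algebra_simps)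
    have xR: "x \<ge> R" and xg: "x > 1" using x1 k1 kR by linarith+
    have sx: "sin x = 1"
    proof -
      have "x = real (2 * k) * pi + pi / 2" unfolding x_def by (simp add: algebra_simps)
      then show ?thesis by (simp add: sin_add)
    qed
    have cx: "norm (cos (\<i> * of_real x)) \<ge> 1"
    proof -
      have e: "cos (\<i> * of_real x) = of_real ((exp x + inverse (exp x)) / 2)" by (rule cosh_real[symmetric])
      have e2: "exp x \<ge> 2" using exp_ge_add_one_self[of x] xg by linarith
      have i0: "inverse (exp x) > 0" by simp
      have h: "(exp x + inverse (exp x)) / 2 \<ge> 1" using e2 i0 by (rule aux_half)
      have "norm (cos (\<i> * of_real x)) = \<bar>(exp x + inverse (exp x)) / 2\<bar>" by (simp only: e norm_of_real)
      then show ?thesis using h by simp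
    qed
    have "norm (AA (of_real x)) = exp (x^2) * norm (cos (\<i> * of_real x))"
      unfolding AA_def A0_def by (simp add: norm_mult sin_of_real sx flip: of_real_power exp_of_real)
    also have "\<dots> \<ge> exp (x^2)" using cx by simp
    finally have big: "norm (AA (of_real x)) \<ge> exp (x^2)" .
    have "norm (AA (of_real x)) \<le> exp (norm (of_real x :: complex) powr l)"
      using R[of "of_real x"] xR xg by simp
    also have "norm (of_real x :: complex) = x" using xg by simp
    finally have "exp (x^2) \<le> exp (x powr l)" using big by linarith
    then have "x^2 \<le> x powr l" by simp
    moreover have "x powr l < x powr 2" using l xg by (intro powr_less_mono)
    moreover have "x powr 2 = x^2" using xg by simp
    ultimately show False by linarith
  qed
qed


lemma EE_in_space:
  assumes b: "\<bar>b\<bar> \<le> 1/2" and nz: "\<And>n. EE b \<alpha> \<beta> (tt n) \<noteq> 0"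
  shows "(\<lambda>z. exp (z^2) * EE b \<alpha> \<beta> z) \<in> cdb_space tt AA (\<lambda>_. 1)"
proof -
  define a where "a n = EE b \<alpha> \<beta> (tt n) / A0' (tt n)" for n
  define K where "K = 4 * (4 * norm \<alpha> + norm \<beta>) * exp (3 * pi / 16)"
  have l2: "is_l2 a"
    unfolding is_l2_def
  proof (rule summable_comparison_test[OF _ summable_mult[OF summable_geometric[of "exp (- pi / 16) ^ 2"]]])
    have "exp (- pi / 16) ^ 2 = exp (- pi / 8)" by (simp add: power2_eq_square exp_add[symmetric])
    then show "norm (exp (- pi / 16) ^ 2) < 1" by simp
    show "\<exists>N. \<forall>n\<ge>N. norm ((norm (a n))\<^sup>2) \<le> K^2 * (exp (- pi / 16) ^ 2) ^ n"
    proof (intro exI allI impI)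
      fix n :: nat
      have "norm (a n) \<le> K * exp (- pi / 16) ^ n" unfolding a_def K_def using coeff_decay[OF b] by simp
      then have "(norm (a n))^2 \<le> (K * exp (- pi / 16) ^ n)^2" by (intro power_mono) simp_all
      then show "norm ((norm (a n))\<^sup>2) \<le> K^2 * (exp (- pi / 16) ^ 2) ^ n"
        by (simp add: power_mult_distrib power_mult[symmetric] mult.commute)
    qed
  qed
  have eq: "(\<lambda>z. exp (z^2) * EE b \<alpha> \<beta> z) = cdb_fun tt AA (\<lambda>_. 1) a"
  proof
    fix z
    show "exp (z^2) * EE b \<alpha> \<beta> z = cdb_fun tt AA (\<lambda>_. 1) a z"
    proof (cases "z \<in> range tt")
      case True
      then obtain m where m: "z = tt m" by auto
      have "inv tt z = m" unfolding m by (rule inv_f_f[OF inj_tt])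
      then show ?thesis unfolding cdb_fun_def using True m A0'_tt_nz[of m]
        by (simp add: deriv_AA_tt a_def Let_def)
    next
      case False
      have Az: "A0 z \<noteq> 0" using False A0_zero_iff by auto
      have s: "(\<lambda>n. a n * of_real (sqrt 1) / (z - tt n)) sums (EE b \<alpha> \<beta> z / A0 z)"
        using interp[OF b nz False] unfolding a_def by (simp add: divide_divide_eq_left)
      have "(\<Sum>n. a n * of_real (sqrt 1) / (z - tt n)) = EE b \<alpha> \<beta> z / A0 z" using sums_unique[OF s] by simp
      then have "AA z * (\<Sum>n. a n * of_real (sqrt 1) / (z - tt n)) = exp (z^2) * EE b \<alpha> \<beta> z"
        using Az by (simp add: AA_def)
      then show ?thesis unfolding cdb_fun_def using False by simp
    qed
  qed
  show ?thesis unfolding cdb_space_def using l2 eq by blast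
qed

lemma zero_in_space: "(\<lambda>_. 0) \<in> cdb_space t A \<mu>"
proof -
  have "(\<lambda>_. 0) = cdb_fun t A \<mu> (\<lambda>_. 0)" by (auto simp: cdb_fun_def fun_eq_iff Let_def)
  moreover have "is_l2 (\<lambda>_. 0)" by (simp add: is_l2_def)
  ultimately show ?thesis unfolding cdb_space_def by blast
qed

lemma cdb_fun_at:
  assumes "inj t"
  shows "cdb_fun t A \<mu> a (t n) = deriv A (t n) * a n * of_real (sqrt (\<mu> n))"
  unfolding cdb_fun_def using inv_f_f[OF assms] by (simp add: Let_def)

lemma space_unique:
  assumes inj: "inj t" and dA: "\<And>n. deriv A (t n) \<noteq> 0" and mu: "\<And>n. \<mu> n > 0"
    and f1: "f1 \<in> cdb_space t A \<mu>" and f2: "f2 \<in> cdb_space t A \<mu>"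
    and eq: "\<And>n. f1 (t n) = f2 (t n)"
  shows "f1 = f2"
proof -
  obtain a1 where a1: "f1 = cdb_fun t A \<mu> a1" using f1 unfolding cdb_space_def by blast
  obtain a2 where a2: "f2 = cdb_fun t A \<mu> a2" using f2 unfolding cdb_space_def by blast
  have "a1 n = a2 n" for n
  proof -
    have "deriv A (t n) * a1 n * of_real (sqrt (\<mu> n)) = deriv A (t n) * a2 n * of_real (sqrt (\<mu> n))"
      using eq[of n] unfolding a1 a2 cdb_fun_at[OF inj] .
    moreover have "of_real (sqrt (\<mu> n)) \<noteq> (0::complex)" using mu[of n] by simp
    ultimately show ?thesis using dA[of n] by simp
  qed
  then have "a1 = a2" by (simp add: fun_eq_iff)
  then show ?thesis using a1 a2 by simp
qed

lemma l2_comb: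
  assumes "is_l2 x" "is_l2 y"
  shows "summable (\<lambda>n. (norm (c * x n - y n))^2)"
proof (rule summable_comparison_test[OF _ summable_add[OF summable_mult[OF assms(1)[unfolded is_l2_def]] summable_mult[OF assms(2)[unfolded is_l2_def]]]])
  show "\<exists>N. \<forall>n\<ge>N. norm ((norm (c * x n - y n))\<^sup>2) \<le> 2 * (norm c)^2 * (norm (x n))\<^sup>2 + 2 * (norm (y n))\<^sup>2"
  proof (intro exI allI impI)
    fix n :: nat
    have "norm (c * x n - y n) \<le> norm c * norm (x n) + norm (y n)"
      using norm_triangle_ineq4[of "c * x n" "y n"] by (simp add: norm_mult)
    then have "(norm (c * x n - y n))^2 \<le> (norm c * norm (x n) + norm (y n))^2"
      by (intro power_mono) simp_all
    also have "\<dots> \<le> 2 * (norm c)^2 * (norm (x n))\<^sup>2 + 2 * (norm (y n))\<^sup>2"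
      using sum_squares_bound[of "norm c * norm (x n)" "norm (y n)"]
      by (simp add: power2_eq_square algebra_simps)
    finally show "norm ((norm (c * x n - y n))\<^sup>2) \<le> 2 * (norm c)^2 * (norm (x n))\<^sup>2 + 2 * (norm (y n))\<^sup>2"
      by simp
  qed
qed


lemma span1_closed:
  assumes inj: "inj t" and dA: "\<And>n. deriv A (t n) \<noteq> 0" and mu: "\<And>n. \<mu> n > 0"
    and gsp: "g \<in> cdb_space t A \<mu>" and g0: "g (t 0) \<noteq> 0"
    and mult: "\<And>c. (\<lambda>z. c * g z) \<in> cdb_space t A \<mu>"
  shows "cdb_closed_subspace t A \<mu> {\<lambda>z. c * g z | c. True}"
  unfolding cdb_closed_subspace_def
proof (intro conjI allI impI ballI)
  show "{\<lambda>z. c * g z | c. True} \<subseteq> cdb_space t A \<mu>" using mult by blast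
  show "(\<lambda>_. 0) \<in> {\<lambda>z. c * g z | c. True}" by (rule CollectI, rule exI[of _ 0]) simp
next
  fix f h assume "f \<in> {\<lambda>z. c * g z | c. True}" "h \<in> {\<lambda>z. c * g z | c. True}"
  then obtain c1 c2 where "f = (\<lambda>z. c1 * g z)" "h = (\<lambda>z. c2 * g z)" by blast
  then show "(\<lambda>z. f z + h z) \<in> {\<lambda>z. c * g z | c. True}"
    by (intro CollectI exI[of _ "c1 + c2"]) (simp add: algebra_simps)
next
  fix c f assume "f \<in> {\<lambda>z. c * g z | c. True}"
  then obtain c1 where "f = (\<lambda>z. c1 * g z)" by blast
  then show "(\<lambda>z. c * f z) \<in> {\<lambda>z. c * g z | c. True}"
    by (intro CollectI exI[of _ "c * c1"]) (simp add: algebra_simps)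
next
  fix F f
  assume F: "\<forall>k. F k \<in> {\<lambda>z. c * g z | c. True}" and fsp: "f \<in> cdb_space t A \<mu>"
    and lim: "(\<lambda>k. cdb_norm t A \<mu> (\<lambda>z. F k z - f z)) \<longlonglongrightarrow> 0"
  have "\<forall>k. \<exists>c. F k = (\<lambda>z. c * g z)" using F by blast
  from choice[OF this] obtain cs where cs': "\<forall>k. F k = (\<lambda>z. cs k * g z)" by blast
  have cs: "F k = (\<lambda>z. cs k * g z)" for k using cs' by blast
  obtain ag where ag: "g = cdb_fun t A \<mu> ag" "is_l2 ag" using gsp unfolding cdb_space_def by blast
  obtain af where af: "f = cdb_fun t A \<mu> af" "is_l2 af" using fsp unfolding cdb_space_def by blast
  define d where "d n = deriv A (t n) * of_real (sqrt (\<mu> n))" for n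
  have gt: "g (t n) = d n * ag n" for n unfolding ag(1) cdb_fun_at[OF inj] d_def by simp
  have ft: "f (t n) = d n * af n" for n unfolding af(1) cdb_fun_at[OF inj] d_def by simp
  have dnz: "d n \<noteq> 0" for n using dA[of n] mu[of n] unfolding d_def by simp
  have nd: "(norm (d n))^2 = (norm (deriv A (t n)))^2 * \<mu> n" for n
    using mu[of n] unfolding d_def by (simp add: norm_mult power_mult_distrib)
  define T where "T k n = (norm (F k (t n) - f (t n)))\<^sup>2 / ((norm (deriv A (t n)))\<^sup>2 * \<mu> n)" for k n
  have Teq: "T k n = (norm (cs k * ag n - af n))^2" for k n
  proof -
    have "F k (t n) - f (t n) = d n * (cs k * ag n - af n)" unfolding cs gt ft by (simp add: algebra_simps)
    then have "(norm (F k (t n) - f (t n)))^2 = (norm (d n))^2 * (norm (cs k * ag n - af n))^2"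
      by (simp add: norm_mult power_mult_distrib)
    moreover have "(norm (d n))^2 \<noteq> 0" using dnz by simp
    ultimately show ?thesis unfolding T_def nd[symmetric] by simp
  qed
  have Tsum: "summable (T k)" for k unfolding Teq by (rule l2_comb[OF ag(2) af(2)])
  have Tnn: "T k n \<ge> 0" for k n unfolding Teq by simp
  have norm_eq: "cdb_norm t A \<mu> (\<lambda>z. F k z - f z) = sqrt (suminf (T k))" for k
    unfolding cdb_norm_def T_def by simp
  have S0: "(\<lambda>k. suminf (T k)) \<longlonglongrightarrow> 0"
  proof -
    have "(\<lambda>k. (cdb_norm t A \<mu> (\<lambda>z. F k z - f z))^2) \<longlonglongrightarrow> 0^2" by (intro tendsto_power lim)
    moreover have "(cdb_norm t A \<mu> (\<lambda>z. F k z - f z))^2 = suminf (T k)" for k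
      unfolding norm_eq using suminf_nonneg[OF Tsum Tnn] by simp
    ultimately show ?thesis by simp
  qed
  have Tn0: "(\<lambda>k. T k n) \<longlonglongrightarrow> 0" for n
  proof (rule tendsto_sandwich[OF _ _ tendsto_const S0])
    show "eventually (\<lambda>k. 0 \<le> T k n) sequentially" using Tnn by simp
    show "eventually (\<lambda>k. T k n \<le> suminf (T k)) sequentially"
    proof (intro always_eventually allI)
      fix k
      have "sum (T k) {n} \<le> suminf (T k)" by (rule sum_le_suminf[OF Tsum]) (simp_all add: Tnn)
      then show "T k n \<le> suminf (T k)" by simp
    qed
  qed
  have conv: "(\<lambda>k. cs k * ag n) \<longlonglongrightarrow> af n" for n
  proof -
    have "(\<lambda>k. sqrt (T k n)) \<longlonglongrightarrow> sqrt 0" by (intro tendsto_real_sqrt Tn0)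
    moreover have "sqrt (T k n) = norm (cs k * ag n - af n)" for k unfolding Teq by simp
    ultimately have "(\<lambda>k. norm (cs k * ag n - af n)) \<longlonglongrightarrow> 0" by simp
    then have "(\<lambda>k. cs k * ag n - af n) \<longlonglongrightarrow> 0" by (simp add: tendsto_norm_zero_iff)
    then have "(\<lambda>k. (cs k * ag n - af n) + af n) \<longlonglongrightarrow> 0 + af n" by (intro tendsto_add tendsto_const)
    then show ?thesis by simp
  qed
  have ag0: "ag 0 \<noteq> 0" using g0 gt[of 0] by auto
  define c where "c = af 0 / ag 0"
  have "(\<lambda>k. (cs k * ag 0) / ag 0) \<longlonglongrightarrow> af 0 / ag 0" by (intro tendsto_divide conv tendsto_const ag0)
  then have csc: "cs \<longlonglongrightarrow> c" using ag0 unfolding c_def by simp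
  have afc: "af n = c * ag n" for n
  proof -
    have "(\<lambda>k. cs k * ag n) \<longlonglongrightarrow> c * ag n" by (intro tendsto_mult csc tendsto_const)
    then show ?thesis using conv[of n] LIMSEQ_unique by blast
  qed
  have "f = (\<lambda>z. c * g z)"
  proof (rule space_unique[OF inj dA mu fsp mult])
    fix n show "f (t n) = c * g (t n)" unfolding ft gt afc by (simp add: algebra_simps)
  qed
  then show "f \<in> {\<lambda>z. c * g z | c. True}" by blast
qed

lemma H_G_span:
  assumes gens: "{divq G l | l. G l = 0} = {g}" and cl: "cdb_closed_subspace t A \<mu> {\<lambda>z. c * g z | c. True}"
  shows "H_G t A \<mu> G = {\<lambda>z. c * g z | c. True}"
proof
  have gL: "g \<in> {\<lambda>z. c * g z | c. True}" by (rule CollectI, rule exI[of _ 1]) simp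
  show "H_G t A \<mu> G \<subseteq> {\<lambda>z. c * g z | c. True}"
    unfolding H_G_def by (rule Inter_lower) (use cl gens gL in auto)
  show "{\<lambda>z. c * g z | c. True} \<subseteq> H_G t A \<mu> G"
    unfolding H_G_def
  proof (intro subsetI InterI)
    fix f S assume f: "f \<in> {\<lambda>z. c * g z | c. True}"
      and S: "S \<in> {S. cdb_closed_subspace t A \<mu> S \<and> {divq G l | l. G l = 0} \<subseteq> S}"
    obtain c where fc: "f = (\<lambda>z. c * g z)" using f by blast
    have "g \<in> S" using S gens by auto
    then show "f \<in> S" using S unfolding fc cdb_closed_subspace_def by blast
  qed
qed


definition Gb :: "real \<Rightarrow> complex \<Rightarrow> complex" where "Gb b z = exp (z^2) * EE b 1 (-1) z"
definition gb :: "real \<Rightarrow> complex \<Rightarrow> complex" where "gb b z = exp (z^2) * EE b 0 1 z"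
definition Lb :: "real \<Rightarrow> (complex \<Rightarrow> complex) set" where "Lb b = {\<lambda>z. c * gb b z | c. True}"

lemma gb_simp: "gb b z = exp (z^2) * exp (of_real b * z)" unfolding gb_def EE_def by simp
lemma Gb_simp: "Gb b z = exp (z^2) * ((z - 1) * exp (of_real b * z))" unfolding Gb_def EE_def by simp

lemma aux_pos_half: "0 < a \<Longrightarrow> 0 < b \<Longrightarrow> (a + b) / 2 \<noteq> (0::real)" by simp

lemma A0_1: "A0 1 \<noteq> 0"
proof -
  have "sin (1::real) > 0" using pi_gt3 by (intro sin_gt_zero) simp_all
  then have s: "sin (1::complex) \<noteq> 0" using sin_of_real[of 1] by (metis of_real_1 of_real_eq_0_iff less_irrefl)
  have e: "cos (\<i> * of_real 1) = of_real ((exp 1 + inverse (exp 1)) / 2)" by (rule cosh_real[symmetric])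
  have X: "(exp 1 + inverse (exp (1::real))) / 2 \<noteq> 0" by (rule aux_pos_half) simp_all
  have c0: "cos (\<i> * of_real 1) \<noteq> 0" unfolding e using X by (metis of_real_eq_0_iff)
  then have c: "cos (\<i> * 1) \<noteq> 0" by simp
  show ?thesis unfolding A0_def using s c by (metis mult_eq_0_iff)
qed

lemma tt_ne_1: "tt n \<noteq> 1"
  using A0_1 A0_zero_iff by auto

lemma Gb_zero_iff: "Gb b z = 0 \<longleftrightarrow> z = 1" unfolding Gb_simp by simp

lemma Gb_deriv: "(Gb b has_field_derivative exp 1 * exp (of_real b)) (at 1)"
proof -
  have "((\<lambda>z::complex. exp (z^2) * ((z - 1) * exp (of_real b * z))) has_field_derivative
      (exp 1 * exp (of_real b))) (at (1::complex))"
    by (rule derivative_eq_intros refl | simp)+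
  then show ?thesis unfolding Gb_simp[abs_def] by simp
qed

lemma deriv_Gb: "deriv (Gb b) 1 = exp 1 * exp (of_real b)"
  by (rule DERIV_imp_deriv[OF Gb_deriv])

lemma divq_Gb: "divq (Gb b) 1 = gb b"
proof
  fix z show "divq (Gb b) 1 z = gb b z"
  proof (cases "z = 1")
    case True then show ?thesis by (simp add: divq_def deriv_Gb gb_simp exp_add[symmetric])
  next
    case False then show ?thesis by (simp add: divq_def Gb_simp gb_simp)
  qed
qed

lemma gens_Gb: "{divq (Gb b) l | l. Gb b l = 0} = {gb b}"
  using Gb_zero_iff divq_Gb by auto

lemma gb_in: assumes "\<bar>b\<bar> \<le> 1/2" shows "(\<lambda>z. c * gb b z) \<in> cdb_space tt AA (\<lambda>_. 1)"
proof (cases "c = 0")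
  case True then show ?thesis using zero_in_space by simp
next
  case False
  have "(\<lambda>z. exp (z^2) * EE b 0 c z) \<in> cdb_space tt AA (\<lambda>_. 1)"
    by (rule EE_in_space[OF assms]) (simp add: EE_def False)
  moreover have "(\<lambda>z. exp (z^2) * EE b 0 c z) = (\<lambda>z. c * gb b z)" by (auto simp: EE_def gb_def fun_eq_iff)
  ultimately show ?thesis by simp
qed

lemma Gb_in: assumes "\<bar>b\<bar> \<le> 1/2" shows "Gb b \<in> cdb_space tt AA (\<lambda>_. 1)"
proof -
  have "(\<lambda>z. exp (z^2) * EE b 1 (-1) z) \<in> cdb_space tt AA (\<lambda>_. 1)"
    by (rule EE_in_space[OF assms]) (use tt_ne_1 in \<open>simp add: EE_def\<close>)
  then show ?thesis unfolding Gb_def[abs_def] .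
qed

lemma Lb_closed: assumes "\<bar>b\<bar> \<le> 1/2" shows "cdb_closed_subspace tt AA (\<lambda>_. 1) (Lb b)"
  unfolding Lb_def
proof (rule span1_closed[OF inj_tt deriv_AA_nz])
  show "0 < (1::real)" by simp
  have "(\<lambda>z. 1 * gb b z) \<in> cdb_space tt AA (\<lambda>_. 1)" by (rule gb_in[OF assms])
  then show "gb b \<in> cdb_space tt AA (\<lambda>_. 1)" by simp
  show "gb b (tt 0) \<noteq> 0" by (simp add: gb_simp)
  show "(\<lambda>z. c * gb b z) \<in> cdb_space tt AA (\<lambda>_. 1)" for c by (rule gb_in[OF assms])
qed

lemma H_Gb: assumes "\<bar>b\<bar> \<le> 1/2" shows "H_G tt AA (\<lambda>_. 1) (Gb b) = Lb b"
  unfolding Lb_def by (rule H_G_span[OF gens_Gb Lb_closed[OF assms, unfolded Lb_def]])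


lemma Lb_nearly: "nearly_invariant (Lb b)"
  unfolding nearly_invariant_def
proof (intro exI ballI impI)
  fix f assume f: "f \<in> Lb b" and f0: "f 0 = 0"
  obtain c where fc: "f = (\<lambda>z. c * gb b z)" using f unfolding Lb_def by blast
  have "c = 0" using f0 unfolding fc by (simp add: gb_simp)
  then have fz: "f = (\<lambda>z. 0)" unfolding fc by simp
  have "divq f 0 = (\<lambda>z. 0 * gb b z)" unfolding fz by (auto simp: divq_def fun_eq_iff)
  then show "divq f 0 \<in> Lb b" unfolding Lb_def by blast
qed

lemma gb_cnj: "cnj (gb b (cnj z)) = gb b z"
  unfolding gb_simp complex_cnj_mult exp_cnj complex_cnj_power complex_cnj_cnj complex_cnj_complex_of_real
  by (rule refl)

lemma Lb_star: "star_closed (Lb b)"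
  unfolding star_closed_def
proof
  fix f assume "f \<in> Lb b"
  then obtain c where fc: "f = (\<lambda>z. c * gb b z)" unfolding Lb_def by blast
  have "(\<lambda>z. cnj (f (cnj z))) = (\<lambda>z. cnj c * gb b z)" unfolding fc using gb_cnj by (simp add: fun_eq_iff)
  then show "(\<lambda>z. cnj (f (cnj z))) \<in> Lb b" unfolding Lb_def by blast
qed

lemma Lb_nocz: "no_common_zeros (Lb b)"
  unfolding no_common_zeros_def
proof
  fix w
  have "(\<lambda>z. 1 * gb b z) \<in> Lb b" unfolding Lb_def by blast
  then have "gb b \<in> Lb b" by simp
  moreover have "gb b w \<noteq> 0" by (simp add: gb_simp)
  ultimately show "\<exists>f\<in>Lb b. f w \<noteq> 0" by blast
qed

lemma Lb_not_sub: assumes "b1 \<noteq> b2" shows "\<not> Lb b1 \<subseteq> Lb b2"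
proof
  assume sub: "Lb b1 \<subseteq> Lb b2"
  have "(\<lambda>z. 1 * gb b1 z) \<in> Lb b1" unfolding Lb_def by blast
  then have "(\<lambda>z. 1 * gb b1 z) \<in> Lb b2" using sub by blast
  then obtain c where c: "(\<lambda>z. 1 * gb b1 z) = (\<lambda>z. c * gb b2 z)" unfolding Lb_def by blast
  have c1: "c = 1" using fun_cong[OF c, of 0] by (simp add: gb_simp)
  have "gb b1 2 = gb b2 2" using fun_cong[OF c, of 2] c1 by simp
  then have "exp (of_real b1 * 2) = exp (of_real b2 * (2::complex))" by (simp add: gb_simp)
  then have "exp (complex_of_real (b1 * 2)) = exp (complex_of_real (b2 * 2))" by simp
  then have "of_real (exp (b1 * 2)) = (of_real (exp (b2 * 2)) :: complex)" by (simp only: exp_of_real)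
  then have "exp (b1 * 2) = exp (b2 * 2)" by (simp only: of_real_eq_iff)
  then have "b1 = b2" by simp
  then show False using assms by simp
qed

theorem theorem1p5:
  shows "\<exists>(t :: nat \<Rightarrow> complex) (A :: complex \<Rightarrow> complex) (\<mu> :: nat \<Rightarrow> real) G1 G2.
     cdb_data t A \<mu> \<and> has_order A 2 \<and>
     (\<forall>G \<in> {G1, G2}.
        G \<in> cdb_space t A \<mu> \<and> G holomorphic_on UNIV \<and>
        (\<forall>z. G z = 0 \<longrightarrow> deriv G z \<noteq> 0) \<and>
        (\<forall>l. G l = 0 \<longrightarrow> divq G l \<in> cdb_space t A \<mu>) \<and>
        cdb_closed_subspace t A \<mu> (H_G t A \<mu> G) \<and>
        nearly_invariant (H_G t A \<mu> G) \<and>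
        star_closed (H_G t A \<mu> G) \<and>
        no_common_zeros (H_G t A \<mu> G)) \<and>
     \<not> H_G t A \<mu> G1 \<subseteq> H_G t A \<mu> G2 \<and>
     \<not> H_G t A \<mu> G2 \<subseteq> H_G t A \<mu> G1"
proof -
  have props: "Gb b \<in> cdb_space tt AA (\<lambda>_. 1) \<and> Gb b holomorphic_on UNIV \<and>
        (\<forall>z. Gb b z = 0 \<longrightarrow> deriv (Gb b) z \<noteq> 0) \<and>
        (\<forall>l. Gb b l = 0 \<longrightarrow> divq (Gb b) l \<in> cdb_space tt AA (\<lambda>_. 1)) \<and>
        cdb_closed_subspace tt AA (\<lambda>_. 1) (H_G tt AA (\<lambda>_. 1) (Gb b)) \<and>
        nearly_invariant (H_G tt AA (\<lambda>_. 1) (Gb b)) \<and>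
        star_closed (H_G tt AA (\<lambda>_. 1) (Gb b)) \<and>
        no_common_zeros (H_G tt AA (\<lambda>_. 1) (Gb b))" if b: "\<bar>b\<bar> \<le> 1/2" for b
  proof (intro conjI)
    show "Gb b \<in> cdb_space tt AA (\<lambda>_. 1)" by (rule Gb_in[OF b])
    show "Gb b holomorphic_on UNIV" unfolding Gb_def[abs_def] by (intro holomorphic_intros EE_holo)
    show "\<forall>z. Gb b z = 0 \<longrightarrow> deriv (Gb b) z \<noteq> 0" using Gb_zero_iff deriv_Gb by simp
    show "\<forall>l. Gb b l = 0 \<longrightarrow> divq (Gb b) l \<in> cdb_space tt AA (\<lambda>_. 1)"
      using Gb_zero_iff divq_Gb gb_in[OF b, of 1] by simp
    show "cdb_closed_subspace tt AA (\<lambda>_. 1) (H_G tt AA (\<lambda>_. 1) (Gb b))"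
      unfolding H_Gb[OF b] by (rule Lb_closed[OF b])
    show "nearly_invariant (H_G tt AA (\<lambda>_. 1) (Gb b))" unfolding H_Gb[OF b] by (rule Lb_nearly)
    show "star_closed (H_G tt AA (\<lambda>_. 1) (Gb b))" unfolding H_Gb[OF b] by (rule Lb_star)
    show "no_common_zeros (H_G tt AA (\<lambda>_. 1) (Gb b))" unfolding H_Gb[OF b] by (rule Lb_nocz)
  qed
  have b0: "\<bar>0::real\<bar> \<le> 1/2" and b1: "\<bar>1/2::real\<bar> \<le> 1/2" by simp_all
  show ?thesis
  proof (intro exI conjI)
    show "cdb_data tt AA (\<lambda>_. 1)" by (rule cdb_data_ok)
    show "has_order AA 2" by (rule has_order_AA)
    show "\<forall>G\<in>{Gb 0, Gb (1/2)}. G \<in> cdb_space tt AA (\<lambda>_. 1) \<and> G holomorphic_on UNIV \<and>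
        (\<forall>z. G z = 0 \<longrightarrow> deriv G z \<noteq> 0) \<and>
        (\<forall>l. G l = 0 \<longrightarrow> divq G l \<in> cdb_space tt AA (\<lambda>_. 1)) \<and>
        cdb_closed_subspace tt AA (\<lambda>_. 1) (H_G tt AA (\<lambda>_. 1) G) \<and>
        nearly_invariant (H_G tt AA (\<lambda>_. 1) G) \<and>
        star_closed (H_G tt AA (\<lambda>_. 1) G) \<and> no_common_zeros (H_G tt AA (\<lambda>_. 1) G)"
    proof (intro ballI)
      fix G assume "G \<in> {Gb 0, Gb (1/2)}"
      then consider "G = Gb 0" | "G = Gb (1/2)" by blast
      then show "G \<in> cdb_space tt AA (\<lambda>_. 1) \<and> G holomorphic_on UNIV \<and>
        (\<forall>z. G z = 0 \<longrightarrow> deriv G z \<noteq> 0) \<and>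
        (\<forall>l. G l = 0 \<longrightarrow> divq G l \<in> cdb_space tt AA (\<lambda>_. 1)) \<and>
        cdb_closed_subspace tt AA (\<lambda>_. 1) (H_G tt AA (\<lambda>_. 1) G) \<and>
        nearly_invariant (H_G tt AA (\<lambda>_. 1) G) \<and>
        star_closed (H_G tt AA (\<lambda>_. 1) G) \<and> no_common_zeros (H_G tt AA (\<lambda>_. 1) G)"
      proof cases
        case 1 show ?thesis unfolding 1 by (rule props[OF b0])
      next
        case 2 show ?thesis unfolding 2 by (rule props[OF b1])
      qed
    qed
    show "\<not> H_G tt AA (\<lambda>_. 1) (Gb 0) \<subseteq> H_G tt AA (\<lambda>_. 1) (Gb (1/2))"
      unfolding H_Gb[OF b0] H_Gb[OF b1] by (rule Lb_not_sub) simp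
    show "\<not> H_G tt AA (\<lambda>_. 1) (Gb (1/2)) \<subseteq> H_G tt AA (\<lambda>_. 1) (Gb 0)"
      unfolding H_Gb[OF b0] H_Gb[OF b1] by (rule Lb_not_sub) simp
  qed
qed


end
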